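(* $M_A^{0,0}/\nabla(M_A^{1,1})\cong\mathbb C$ (the one-dimensional trivial $\mathfrak g$-module), and $\ker(\nabla:M_A^{1,1}\to M_A^{0,0})=\nabla(M_A^{2,2})$.
   Context: Let $\Lambda(4)$ be the Grassmann superalgebra on odd generators $\xi_1,\dots,\xi_4$; $\xi_I=\xi_{i_1}\cdots\xi_{i_r}$, $\xi_{ij}=\xi_i\xi_j$. Let $K(1,4)_+=\mathbb C[t]\otimes\Lambda(4)$ with bracket $[f,g]=(2f-\sum_i\xi_i\partial_{\xi_i}f)\partial_tg-\partial_tf\,(2g-\sum_i\xi_i\partial_{\xi_i}g)+(-1)^{p(f)}\sum_i\partial_{\xi_i}f\,\partial_{\xi_i}g$, and $\mathfrak g=K(1,4)_+\oplus\mathbb CC$ the central extension by the 2-cocycle $\psi$ whose only nonzero values on the basis $\{t^m\xi_I\}$ are (up to skew-symmetry) $\psi(1,\xi_1\xi_2\xi_3\xi_4)=-2$, $\psi(\xi_i,\partial_{\xi_i}(\xi_1\xi_2\xi_3\xi_4))=-1$. Grade by $\deg t^m\xi_I=2m+|I|-2$, $\deg C=0$; $\mathfrak g_0=\langle C,t,\xi_{ij}\rangle$. Let $\eta_i$ be the image of $\xi_i$ in $U(\mathfrak g_{<0})$; $w_{11}=\eta_2+i\eta_1$, $w_{22}=\eta_2-i\eta_1$, $w_{12}=-\eta_4+i\eta_3$, $w_{21}=\eta_4+i\eta_3$. $\mathfrak g_0^{ss}$ is spanned by $e_x=\frac12(-\xi_{13}-\xi_{24}-i\xi_{14}+i\xi_{23})$,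 $f_x=\frac12(\xi_{13}+\xi_{24}-i\xi_{14}+i\xi_{23})$, $h_x=-i\xi_{12}+i\xi_{34}$, $e_y=\frac12(-\xi_{13}+\xi_{24}+i\xi_{14}+i\xi_{23})$, $f_y=\frac12(\xi_{13}-\xi_{24}+i\xi_{14}+i\xi_{23})$, $h_y=-i\xi_{12}-i\xi_{34}$, identified with $x_1\partial_{x_2},x_2\partial_{x_1},x_1\partial_{x_1}-x_2\partial_{x_2},y_1\partial_{y_2},y_2\partial_{y_1},y_1\partial_{y_1}-y_2\partial_{y_2}$ acting on $V_A=\mathbb C[x_1,x_2,y_1,y_2]$ as differential operators. $t$ acts on $V_A$ as $-\frac12(E_x+E_y)$ and $C$ as $\frac12(E_x-E_y)$, where $E_x=x_1\partial_{x_1}+x_2\partial_{x_2}$, $E_y=y_1\partial_{y_1}+y_2\partial_{y_2}$. Let $V_A^{m,n}$ be the space of polynomials of bidegree $(m,n)$ in $(x,y)$ (so $V_A^{0,0}\cong F(0,0,0,0)$), and $M_A^{m,n}=U(\mathfrak g)\otimes_{U(\mathfrak g_{\ge0})}V_A^{m,n}\cong U(\mathfrak g_{<0})\otimes V_A^{m,n}$ ($\mathfrak g_{>0}$ acting trivially). Define $\nabla:M_A^{m,n}\to M_A^{m-1,n-1}$ by $\nabla(u\otimes v)=\sum_{a,b\in\{1,2\}}uw_{ab}\otimes\frac{\partial^2v}{\partial x_a\partial y_b}$; it is a homomorphism of $\mathfrak g$-modules. *)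

theory Defs
  imports Complex_Main "HOL-Library.Function_Algebras"
begin

section \<open>Concrete model of M_A^{m,n} = U(g_{<0}) \<otimes> V_A^{m,n}\<close>

text \<open>U(g_{<0}) has PBW basis Theta^k eta_I (k a natural number, I a subset of {1..4},
  eta_I the ordered product), where Theta is the image of the element 1 (= t^0) of g.
  In U(g_{<0}) one has [eta_i,eta_j] = -delta_ij Theta (since [xi_i,xi_j] = -delta_ij and
  psi(xi_i,xi_j) = 0) and Theta is central.  A basis vector of M_A^{m,n} is
  Theta^k eta_I \<otimes> x1^p1 x2^p2 y1^q1 y2^q2, encoded by the key (k, I, (p1,p2,q1,q2)).
  Elements are coefficient functions on keys (finitely supported for genuine elements).\<close>

type_synonym mon = "nat \<times> nat \<times> nat \<times> nat"
type_synonym key = "nat \<times> nat set \<times> mon"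
type_synonym elt = "key \<Rightarrow> complex"

definition sc :: "complex \<Rightarrow> elt \<Rightarrow> elt" where
  "sc c f = (\<lambda>x. c * f x)"

definition bv :: "key \<Rightarrow> elt" where
  "bv k0 = (\<lambda>x. if x = k0 then 1 else 0)"

definition supp :: "elt \<Rightarrow> key set" where
  "supp f = {x. f x \<noteq> 0}"

definition lin :: "(key \<Rightarrow> elt) \<Rightarrow> elt \<Rightarrow> elt" where
  "lin L f = (\<Sum>x\<in>supp f. sc (f x) (L x))"

fun bideg :: "mon \<Rightarrow> nat \<times> nat" where
  "bideg (p1, p2, q1, q2) = (p1 + p2, q1 + q2)"

definition inM :: "nat \<Rightarrow> nat \<Rightarrow> elt \<Rightarrow> bool" where
  "inM m n f \<longleftrightarrow> finite (supp f) \<and>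
     (\<forall>k I e. f (k, I, e) \<noteq> 0 \<longrightarrow> I \<subseteq> {1..4} \<and> bideg e = (m, n))"

definition cnt_gt :: "nat set \<Rightarrow> nat \<Rightarrow> nat" where
  "cnt_gt I j = card {i\<in>I. j < i}"

definition cnt_lt :: "nat set \<Rightarrow> nat \<Rightarrow> nat" where
  "cnt_lt I j = card {i\<in>I. i < j}"

fun rmul_eta_b :: "nat \<Rightarrow> key \<Rightarrow> elt" where
  "rmul_eta_b j (k, I, e) =
     (if j \<notin> I then sc ((-1) ^ cnt_gt I j) (bv (k, insert j I, e))
      else sc ((-1) ^ cnt_gt I j * (-1/2)) (bv (Suc k, I - {j}, e)))"

fun lmul_eta_b :: "nat \<Rightarrow> key \<Rightarrow> elt" where
  "lmul_eta_b j (k, I, e) =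
     (if j \<notin> I then sc ((-1) ^ cnt_lt I j) (bv (k, insert j I, e))
      else sc ((-1) ^ cnt_lt I j * (-1/2)) (bv (Suc k, I - {j}, e)))"

fun theta_b :: "key \<Rightarrow> elt" where
  "theta_b (k, I, e) = bv (Suc k, I, e)"

text \<open>w_ab = sum_j wc a b j * eta_j:
  w11 = eta2 + i eta1, w22 = eta2 - i eta1, w12 = -eta4 + i eta3, w21 = eta4 + i eta3.\<close>
definition wc :: "nat \<Rightarrow> nat \<Rightarrow> nat \<Rightarrow> complex" where
  "wc a b j =
    (if a = 1 \<and> b = 1 then (if j = 2 then 1 else if j = 1 then \<i> else 0)
     else if a = 2 \<and> b = 2 then (if j = 2 then 1 else if j = 1 then - \<i> else 0)
     else if a = 1 \<and> b = 2 then (if j = 4 then -1 else if j = 3 then \<i> else 0)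
     else if a = 2 \<and> b = 1 then (if j = 4 then 1 else if j = 3 then \<i> else 0)
     else 0)"

text \<open>d^2/(dx_a dy_b) of x1^p1 x2^p2 y1^q1 y2^q2 = dcoef a b e * monomial dmon a b e.\<close>
fun dcoef :: "nat \<Rightarrow> nat \<Rightarrow> mon \<Rightarrow> complex" where
  "dcoef a b (p1, p2, q1, q2) =
     of_nat (if a = 1 then p1 else p2) * of_nat (if b = 1 then q1 else q2)"

fun dmon :: "nat \<Rightarrow> nat \<Rightarrow> mon \<Rightarrow> mon" where
  "dmon a b (p1, p2, q1, q2) =
     ((if a = 1 then p1 - 1 else p1), (if a = 2 then p2 - 1 else p2),
      (if b = 1 then q1 - 1 else q1), (if b = 2 then q2 - 1 else q2))"

text \<open>nabla(u \<otimes> v) = sum_{a,b} u w_ab \<otimes> d^2 v/(dx_a dy_b).\<close>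
fun nabla_b :: "key \<Rightarrow> elt" where
  "nabla_b (k, I, e) =
     (\<Sum>a\<in>{1,2}. \<Sum>b\<in>{1,2}. \<Sum>j\<in>{1..4}.
        sc (wc a b j * dcoef a b e) (rmul_eta_b j (k, I, dmon a b e)))"

definition nabla :: "elt \<Rightarrow> elt" where
  "nabla = lin nabla_b"

section \<open>The Lie superalgebra g = K(1,4)_+ \<oplus> CC\<close>

text \<open>Basis: Tb m I = t^m xi_I (I a subset of {1..4}), and Cb = C.\<close>
datatype gb = Tb nat "nat set" | Cb

fun gvalid :: "gb \<Rightarrow> bool" where
  "gvalid (Tb m I) = (I \<subseteq> {1..4})"
| "gvalid Cb = True"

fun gdeg :: "gb \<Rightarrow> int" where
  "gdeg (Tb m I) = 2 * int m + int (card I) - 2"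
| "gdeg Cb = 0"

fun gpar :: "gb \<Rightarrow> nat" where
  "gpar (Tb m I) = card I mod 2"
| "gpar Cb = 0"

text \<open>xi_I xi_J = gmul_sign I J * xi_{I \<union> J}.\<close>
definition gmul_sign :: "nat set \<Rightarrow> nat set \<Rightarrow> int" where
  "gmul_sign I J = (if I \<inter> J = {} then (-1) ^ card {(i, j). i \<in> I \<and> j \<in> J \<and> j < i} else 0)"

text \<open>(left) derivative: d/dxi_i xi_I = dsign i I * xi_{I - {i}}.\<close>
definition dsign :: "nat \<Rightarrow> nat set \<Rightarrow> int" where
  "dsign i I = (if i \<in> I then (-1) ^ card {k\<in>I. k < i} else 0)"

text \<open>The cocycle psi on basis elements: psi(1, xi_1234) = -2,
  psi(xi_i, d_i(xi_1234)) = -1, i.e. psi(xi_i, xi_{{1..4}-{i}}) = (-1)^i,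
  extended by (super) skew-symmetry; all other values vanish.\<close>
fun psi :: "gb \<Rightarrow> gb \<Rightarrow> complex" where
  "psi (Tb m I) (Tb n J) =
     (if m = 0 \<and> n = 0 then
        (if I = {} \<and> J = {1..4} then -2
         else if I = {1..4} \<and> J = {} then 2
         else if card I = 1 \<and> I \<subseteq> {1..4} \<and> J = {1..4} - I then (-1) ^ (the_elem I)
         else if card J = 1 \<and> J \<subseteq> {1..4} \<and> I = {1..4} - J then (-1) ^ (the_elem J)
         else 0)
      else 0)"
| "psi _ _ = 0"

text \<open>br b1 b2 b = coefficient of basis element b in [b1, b2] (the K(1,4)_+ bracket plus psi(b1,b2) C).\<close>
fun br :: "gb \<Rightarrow> gb \<Rightarrow> gb \<Rightarrow> complex" where
  "br (Tb m I) (Tb n J) (Tb p K) =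
     (if 1 \<le> m + n \<and> p = m + n - 1 \<and> K = I \<union> J
      then of_int (((2 - int (card I)) * int n - int m * (2 - int (card J))) * gmul_sign I J)
      else 0)
   + (if p = m + n then
        (-1) ^ (card I) *
        (\<Sum>i\<in>{1..4}. if (I - {i}) \<union> (J - {i}) = K
                       then of_int (dsign i I * dsign i J * gmul_sign (I - {i}) (J - {i})) else 0)
      else 0)"
| "br (Tb m I) (Tb n J) Cb = psi (Tb m I) (Tb n J)"
| "br _ _ _ = 0"

definition inM00 :: "elt \<Rightarrow> bool" where
  "inM00 f = inM 0 0 f"

definition one00 :: elt where
  "one00 = bv (0, {}, (0, 0, 0, 0))"

text \<open>rho is the action of g on M_A^{0,0} = U(g) \<otimes>_{U(g_{\<ge>0})} V_A^{0,0}, given on basis elements of g: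
  a super-representation (preserving M_A^{0,0}, linear), in which g_{<0} acts by left multiplication in
  U(g_{<0}), and g_{\<ge>0} annihilates 1 \<otimes> 1 (V_A^{0,0} is the trivial g_0-module: t, C and g_0^{ss}
  act by 0 on constants, and g_{>0} acts trivially).  These conditions characterize the induced module.\<close>
definition induced_action_00 :: "(gb \<Rightarrow> elt \<Rightarrow> elt) \<Rightarrow> bool" where
  "induced_action_00 \<rho> \<longleftrightarrow>
     (\<forall>b f. gvalid b \<longrightarrow> inM00 f \<longrightarrow> inM00 (\<rho> b f)) \<and>
     (\<forall>b f g c. gvalid b \<longrightarrow> inM00 f \<longrightarrow> inM00 g \<longrightarrow>
        \<rho> b (f + g) = \<rho> b f + \<rho> b g \<and> \<rho> b (sc c f) = sc c (\<rho> b f)) \<and>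
     (\<forall>b1 b2 f. gvalid b1 \<longrightarrow> gvalid b2 \<longrightarrow> inM00 f \<longrightarrow>
        \<rho> b1 (\<rho> b2 f) - sc ((-1) ^ (gpar b1 * gpar b2)) (\<rho> b2 (\<rho> b1 f))
          = (\<Sum>b\<in>{b. br b1 b2 b \<noteq> 0}. sc (br b1 b2 b) (\<rho> b f))) \<and>
     (\<forall>f. inM00 f \<longrightarrow> \<rho> (Tb 0 {}) f = lin theta_b f) \<and>
     (\<forall>j f. j \<in> {1..4} \<longrightarrow> inM00 f \<longrightarrow> \<rho> (Tb 0 {j}) f = lin (lmul_eta_b j) f) \<and>
     (\<forall>b. gvalid b \<longrightarrow> 0 \<le> gdeg b \<longrightarrow> \<rho> b one00 = 0)"

end

theory Submission
  imports Defs
begin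


declare plus_fun_apply[simp del] zero_fun_apply[simp del] minus_apply[simp del] uminus_apply[simp del]
lemmas fun_apps = plus_fun_apply zero_fun_apply minus_apply uminus_apply

lemma sum_fun_apply: "(\<Sum>a\<in>A. f a) x = (\<Sum>a\<in>A. f a x)"
  by (induction A rule: infinite_finite_induct) (auto simp: fun_apps)

lemma sum_list_fun_apply: "(sum_list fs) x = sum_list (map (\<lambda>f. f x) fs)"
  by (induction fs) (auto simp: fun_apps)

lemma sc_apply: "sc c f x = c * f x" by (simp add: sc_def)
lemma bv_apply: "bv k0 x = (if x = k0 then 1 else 0)" by (simp add: bv_def)
lemma sc_0 [simp]: "sc 0 f = 0" by (simp add: sc_def fun_eq_iff fun_apps)
lemma sc_zero [simp]: "sc c 0 = 0" by (simp add: sc_def fun_eq_iff fun_apps)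
lemma sc_1 [simp]: "sc 1 f = f" by (simp add: sc_def fun_eq_iff fun_apps)
lemma sc_add: "sc c (f + g) = sc c f + sc c g" by (simp add: sc_def fun_eq_iff fun_apps algebra_simps)
lemma sc_add_left: "sc (a + b) f = sc a f + sc b f" by (simp add: sc_def fun_eq_iff fun_apps algebra_simps)
lemma sc_diff: "sc c (f - g) = sc c f - sc c g" by (simp add: sc_def fun_eq_iff fun_apps algebra_simps)
lemma sc_sc [simp]: "sc a (sc b f) = sc (a * b) f" by (simp add: sc_def fun_eq_iff fun_apps)
lemma sc_sum: "sc c (\<Sum>a\<in>A. f a) = (\<Sum>a\<in>A. sc c (f a))"
  by (induction A rule: infinite_finite_induct) (simp_all add: sc_add)
lemma sc_minus1: "sc (-1) f = - f" by (simp add: sc_def fun_eq_iff fun_apps)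

definition fs :: "elt \<Rightarrow> bool" where "fs f \<longleftrightarrow> finite (supp f)"

lemma supp_add: "supp (f + g) \<subseteq> supp f \<union> supp g" by (auto simp: supp_def fun_apps sc_apply)
lemma supp_sc: "supp (sc c f) \<subseteq> supp f" by (auto simp: supp_def fun_apps sc_apply)
lemma supp_bv [simp]: "supp (bv x) = {x}" by (auto simp: supp_def bv_def)
lemma supp_zero [simp]: "supp 0 = {}" by (auto simp: supp_def fun_apps sc_apply)
lemma supp_neg [simp]: "supp (- f) = supp f" by (auto simp: supp_def fun_apps sc_apply)

lemma fs_add [intro]: "fs f \<Longrightarrow> fs g \<Longrightarrow> fs (f + g)"
  unfolding fs_def by (meson finite_UnI finite_subset supp_add)
lemma fs_sc [intro]: "fs f \<Longrightarrow> fs (sc c f)"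
  unfolding fs_def by (meson finite_subset supp_sc)
lemma fs_bv [intro, simp]: "fs (bv x)" by (simp add: fs_def)
lemma fs_zero [intro, simp]: "fs 0" by (simp add: fs_def)
lemma fs_neg [intro]: "fs f \<Longrightarrow> fs (- f)" by (simp add: fs_def)
lemma fs_diff [intro]: "fs f \<Longrightarrow> fs g \<Longrightarrow> fs (f - g)"
  using fs_add[of f "- g"] by (simp add: fs_neg)
lemma fs_sum [intro]: "(\<And>a. a \<in> A \<Longrightarrow> fs (h a)) \<Longrightarrow> fs (\<Sum>a\<in>A. h a)"
  by (induction A rule: infinite_finite_induct) auto

lemma lin_alt:
  assumes "finite S" "supp f \<subseteq> S"
  shows "lin L f = (\<Sum>x\<in>S. sc (f x) (L x))"
proof -
  have "(\<Sum>x\<in>S. sc (f x) (L x)) = (\<Sum>x\<in>supp f. sc (f x) (L x))"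
    by (rule sum.mono_neutral_right) (use assms in \<open>auto simp: supp_def\<close>)
  then show ?thesis by (simp add: lin_def)
qed

lemma lin_add: "fs f \<Longrightarrow> fs g \<Longrightarrow> lin L (f + g) = lin L f + lin L g"
proof -
  assume a: "fs f" "fs g"
  let ?S = "supp f \<union> supp g"
  have fin: "finite ?S" using a by (simp add: fs_def)
  have "lin L (f + g) = (\<Sum>x\<in>?S. sc ((f + g) x) (L x))"
    by (rule lin_alt[OF fin]) (use supp_add in blast)
  also have "\<dots> = (\<Sum>x\<in>?S. sc (f x) (L x)) + (\<Sum>x\<in>?S. sc (g x) (L x))"
    by (simp add: sc_add_left sum.distrib plus_fun_apply)
  also have "\<dots> = lin L f + lin L g"
    using lin_alt[OF fin, of f L] lin_alt[OF fin, of g L] by auto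
  finally show ?thesis .
qed

lemma lin_sc: "lin L (sc c f) = sc c (lin L f)"
proof (cases "c = 0")
  case True then show ?thesis by (simp add: lin_def)
next
  case False
  then have "supp (sc c f) = supp f" by (auto simp: supp_def fun_apps sc_apply)
  then show ?thesis by (simp add: lin_def sc_sum mult.commute sc_apply)
qed

lemma lin_bv [simp]: "lin L (bv x) = L x"
  by (simp add: lin_def bv_apply)

lemma lin_zero [simp]: "lin L 0 = 0" by (simp add: lin_def)

lemma lin_neg: "lin L (- f) = - lin L f"
  using lin_sc[of L "-1" f] by (simp add: sc_minus1)

lemma lin_diff: "fs f \<Longrightarrow> fs g \<Longrightarrow> lin L (f - g) = lin L f - lin L g"
  using lin_add[of f "- g" L] by (simp add: lin_neg fs_neg)

lemma lin_sum: "(\<And>a. a \<in> A \<Longrightarrow> fs (h a)) \<Longrightarrow> lin L (\<Sum>a\<in>A. h a) = (\<Sum>a\<in>A. lin L (h a))"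
proof (induction A rule: infinite_finite_induct)
  case (insert x F)
  then show ?case by (simp add: lin_add fs_sum)
qed simp_all

lemma lin_cong: "(\<And>x. x \<in> supp f \<Longrightarrow> L x = L' x) \<Longrightarrow> lin L f = lin L' f"
  by (simp add: lin_def)

lemma lin_apply: "lin L f y = (\<Sum>x\<in>supp f. f x * L x y)"
  by (simp add: lin_def sum_fun_apply sc_apply)

lemma lin_bv_id: "fs f \<Longrightarrow> lin bv f = f"
proof (rule ext)
  fix y assume "fs f"
  have "lin bv f y = (\<Sum>x\<in>supp f. f x * (if y = x then 1 else 0))"
    by (simp add: lin_apply bv_def)
  also have "\<dots> = (\<Sum>x\<in>supp f. if x = y then f x else 0)"
    by (rule sum.cong) auto
  also have "\<dots> = f y" using \<open>fs f\<close> by (auto simp: fs_def supp_def)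
  finally show "lin bv f y = f y" .
qed

lemma lin_expand: "lin M f = (\<Sum>x\<in>supp f. sc (f x) (M x))" by (simp add: lin_def)

lemma lin_lin:
  assumes "fs f" "\<And>x. x \<in> supp f \<Longrightarrow> fs (M x)"
  shows "lin L (lin M f) = lin (\<lambda>x. lin L (M x)) f"
  unfolding lin_expand[of M f]
  by (subst lin_sum) (use assms in \<open>auto simp: lin_sc lin_expand[of _ f]\<close>)

lemma lin_fun_diff: "lin (\<lambda>x. A x - B x) f = lin A f - lin B f"
  by (simp add: lin_def sc_diff sum_subtractf)

lemma lin_fun_shift: "lin (\<lambda>x. sc c (A x)) f = sc c (lin A f)"
  by (simp add: lin_def sc_sum mult.commute)

lemma fs_lin: "fs f \<Longrightarrow> (\<And>x. x \<in> supp f \<Longrightarrow> fs (L x)) \<Longrightarrow> fs (lin L f)"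
  unfolding lin_def by (intro fs_sum fs_sc) auto




lemma inM_fs: "inM m n f \<Longrightarrow> fs f" by (simp add: inM_def fs_def)
lemma inM_zero [simp]: "inM m n 0" by (simp add: inM_def zero_fun_apply)
lemma inM_intro: "finite (supp f) \<Longrightarrow> (\<And>k I e. f (k, I, e) \<noteq> 0 \<Longrightarrow> I \<subseteq> {1..4} \<and> bideg e = (m, n)) \<Longrightarrow> inM m n f"
  unfolding inM_def by blast
lemma inM_D: "inM m n f \<Longrightarrow> f (k, I, e) \<noteq> 0 \<Longrightarrow> I \<subseteq> {1..4} \<and> bideg e = (m, n)"
  unfolding inM_def by blast
lemma inM_add: "inM m n f \<Longrightarrow> inM m n g \<Longrightarrow> inM m n (f + g)"
proof (rule inM_intro)
  assume a: "inM m n f" "inM m n g"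
  then show "finite (supp (f + g))" using fs_add[of f g] inM_fs by (auto simp: fs_def)
  fix k I e assume "(f + g) (k, I, e) \<noteq> 0"
  then have "f (k, I, e) \<noteq> 0 \<or> g (k, I, e) \<noteq> 0" by (auto simp: plus_fun_apply)
  then show "I \<subseteq> {1..4} \<and> bideg e = (m, n)" using inM_D[OF a(1)] inM_D[OF a(2)] by blast
qed
lemma inM_sc: "inM m n f \<Longrightarrow> inM m n (sc c f)"
proof (rule inM_intro)
  assume a: "inM m n f"
  then show "finite (supp (sc c f))" using fs_sc[of f c] inM_fs by (auto simp: fs_def)
  fix k I e assume "sc c f (k, I, e) \<noteq> 0"
  then have "f (k, I, e) \<noteq> 0" by (auto simp: sc_apply)
  then show "I \<subseteq> {1..4} \<and> bideg e = (m, n)" using inM_D[OF a] by blast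
qed
lemma inM_sc': "(c \<noteq> 0 \<Longrightarrow> inM m n f) \<Longrightarrow> inM m n (sc c f)"
  by (cases "c = 0") (auto intro: inM_sc)
lemma inM_neg: "inM m n f \<Longrightarrow> inM m n (- f)"
  using inM_sc[of m n f "-1"] by (simp add: sc_minus1)
lemma inM_diff: "inM m n f \<Longrightarrow> inM m n g \<Longrightarrow> inM m n (f - g)"
  using inM_add[of m n f "- g"] inM_neg by simp
lemma inM_sum: "(\<And>a. a \<in> A \<Longrightarrow> inM m n (h a)) \<Longrightarrow> inM m n (\<Sum>a\<in>A. h a)"
  by (induction A rule: infinite_finite_induct) (auto intro: inM_add)
lemma inM_bv: "I \<subseteq> {1..4} \<Longrightarrow> bideg e = (m, n) \<Longrightarrow> inM m n (bv (k, I, e))"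
  by (rule inM_intro) (simp, auto simp: bv_def split: if_splits)
lemma inM_lin: "fs f \<Longrightarrow> (\<And>x. x \<in> supp f \<Longrightarrow> inM m n (L x)) \<Longrightarrow> inM m n (lin L f)"
  unfolding lin_def by (intro inM_sum inM_sc) auto
lemma inM_supp: "inM m n f \<Longrightarrow> (k, I, e) \<in> supp f \<Longrightarrow> I \<subseteq> {1..4} \<and> bideg e = (m, n)"
  by (rule inM_D) (auto simp: supp_def)

lemma rmul_inM:
  "I \<subseteq> {1..4} \<Longrightarrow> j \<in> {1..4} \<Longrightarrow> bideg e = (m, n) \<Longrightarrow> inM m n (rmul_eta_b j (k, I, e))"
  by (auto intro!: inM_sc inM_bv)

lemma wc_nz: "wc a b j \<noteq> 0 \<Longrightarrow> j \<in> {1..4}"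
  by (auto simp: wc_def split: if_splits)

lemma dmon_bideg:
  assumes "a \<in> {1,2}" "b \<in> {1,2}" "dcoef a b e \<noteq> 0" "bideg e = (m, n)"
  shows "bideg (dmon a b e) = (m - 1, n - 1)"
proof -
  obtain p1 p2 q1 q2 where e: "e = (p1, p2, q1, q2)" by (cases e) auto
  show ?thesis using assms unfolding e by (auto split: if_splits)
qed

lemma nabla_b_inM:
  assumes "I \<subseteq> {1..4}" "bideg e = (m, n)"
  shows "inM (m - 1) (n - 1) (nabla_b (k, I, e))"
  unfolding nabla_b.simps
proof (intro inM_sum inM_sc')
  fix a b j assume ab: "a \<in> {1,2}" "b \<in> {1,2}" "j \<in> {1..4::nat}"
    and c: "wc a b j * dcoef a b e \<noteq> 0"
  show "inM (m - 1) (n - 1) (rmul_eta_b j (k, I, dmon a b e))"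
    by (rule rmul_inM) (use ab c assms dmon_bideg in auto)
qed

lemma nabla_inM: "inM m n f \<Longrightarrow> inM (m - 1) (n - 1) (nabla f)"
  unfolding nabla_def
proof (rule inM_lin)
  assume "inM m n f" then show "fs f" by (rule inM_fs)
  fix x assume x: "x \<in> supp f"
  obtain k I e where xe: "x = (k, I, e)" by (cases x) auto
  show "inM (m - 1) (n - 1) (nabla_b x)"
    unfolding xe by (rule nabla_b_inM) (use inM_supp[OF \<open>inM m n f\<close>] x xe in auto)
qed

lemma rmul_z: "rmul_eta_b j x (0, {}, e') = 0"
  by (cases x) (auto simp: sc_apply bv_def)

lemma nabla_b_z: "nabla_b x (0, {}, e') = 0"
  by (cases x) (simp only: nabla_b.simps sum_fun_apply sc_apply rmul_z mult_zero_right sum.neutral_const)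

lemma nabla_z: "nabla f (0, {}, e') = 0"
  by (simp add: nabla_def lin_apply nabla_b_z)

lemma fs_rmul [intro]: "fs (rmul_eta_b j x)"
  by (cases x) (simp add: fs_sc)
lemma fs_nabla_b [intro]: "fs (nabla_b x)"
  by (cases x) (simp only: nabla_b.simps; intro fs_sum fs_sc fs_rmul)

lemma fs_nabla: "fs f \<Longrightarrow> fs (nabla f)"
  unfolding nabla_def by (rule fs_lin) auto

fun shk :: "nat \<Rightarrow> key \<Rightarrow> key" where "shk n (k, I, e) = (k + n, I, e)"

definition shiftn :: "nat \<Rightarrow> elt \<Rightarrow> elt" where
  "shiftn n f = (\<lambda>(k, I, e). if n \<le> k then f (k - n, I, e) else 0)"

lemma shiftn_apply: "shiftn n f (k, I, e) = (if n \<le> k then f (k - n, I, e) else 0)"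
  by (simp add: shiftn_def)
lemma shiftn_shk [simp]: "shiftn n f (shk n x) = f x"
  by (cases x) (simp add: shiftn_apply)

lemma shiftn_add: "shiftn n (f + g) = shiftn n f + shiftn n g"
  by (auto simp: fun_eq_iff shiftn_def fun_apps)
lemma shiftn_sc: "shiftn n (sc c f) = sc c (shiftn n f)"
  by (auto simp: fun_eq_iff shiftn_def sc_apply)
lemma shiftn_zero [simp]: "shiftn n 0 = 0"
  by (auto simp: fun_eq_iff shiftn_def fun_apps)
lemma shiftn_neg: "shiftn n (- f) = - shiftn n f"
  by (auto simp: fun_eq_iff shiftn_def fun_apps)
lemma shiftn_diff: "shiftn n (f - g) = shiftn n f - shiftn n g"
  by (auto simp: fun_eq_iff shiftn_def fun_apps)
lemma shiftn_sum: "shiftn n (\<Sum>a\<in>A. h a) = (\<Sum>a\<in>A. shiftn n (h a))"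
  by (induction A rule: infinite_finite_induct) (simp_all add: shiftn_add)
lemma shiftn_bv: "shiftn n (bv x) = bv (shk n x)"
  by (cases x) (auto simp: fun_eq_iff shiftn_def bv_def)
lemma shiftn_bv': "shiftn n (bv (k, I, e)) = bv (k + n, I, e)"
  by (simp add: shiftn_bv)
lemma shiftn_shiftn: "shiftn a (shiftn b f) = shiftn (a + b) f"
  by (auto simp: fun_eq_iff shiftn_def)
lemma shiftn_0 [simp]: "shiftn 0 f = f"
  by (auto simp: fun_eq_iff shiftn_def)

lemma inj_shk: "inj (shk n)"
proof (rule injI)
  fix x y show "shk n x = shk n y \<Longrightarrow> x = y" by (cases x; cases y) auto
qed

lemma supp_shiftn: "supp (shiftn n f) = shk n ` supp f"
proof (rule set_eqI)
  fix y :: key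
  obtain k I e where y: "y = (k, I, e)" by (cases y) auto
  show "y \<in> supp (shiftn n f) \<longleftrightarrow> y \<in> shk n ` supp f"
  proof
    assume "y \<in> supp (shiftn n f)"
    then have "n \<le> k" "f (k - n, I, e) \<noteq> 0" by (auto simp: supp_def y shiftn_apply split: if_splits)
    then show "y \<in> shk n ` supp f" unfolding y supp_def
      by (intro image_eqI[of _ _ "(k - n, I, e)"]) auto
  next
    assume "y \<in> shk n ` supp f"
    then obtain x where "x \<in> supp f" "y = shk n x" by auto
    then show "y \<in> supp (shiftn n f)" by (auto simp: supp_def)
  qed
qed

lemma fs_shiftn [intro]: "fs f \<Longrightarrow> fs (shiftn n f)"
  by (simp add: fs_def supp_shiftn)

lemma inM_shiftn: "inM m n f \<Longrightarrow> inM m n (shiftn k f)"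
proof (rule inM_intro)
  assume a: "inM m n f"
  then show "finite (supp (shiftn k f))" using fs_shiftn[of f k] inM_fs by (auto simp: fs_def)
  fix k' I e assume "shiftn k f (k', I, e) \<noteq> 0"
  then have "f (k' - k, I, e) \<noteq> 0" by (auto simp: shiftn_apply split: if_splits)
  then show "I \<subseteq> {1..4} \<and> bideg e = (m, n)" using inM_D[OF a] by blast
qed

lemma lin_shiftn: "lin L (shiftn n f) = lin (\<lambda>x. L (shk n x)) f"
proof -
  have "lin L (shiftn n f) = (\<Sum>y\<in>shk n ` supp f. sc (shiftn n f y) (L y))"
    by (simp add: lin_def supp_shiftn)
  also have "\<dots> = (\<Sum>x\<in>supp f. sc (shiftn n f (shk n x)) (L (shk n x)))"
    by (rule sum.reindex[unfolded comp_def]) (meson inj_shk inj_on_subset subset_UNIV)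
  also have "\<dots> = lin (\<lambda>x. L (shk n x)) f" by (simp add: lin_def)
  finally show ?thesis .
qed

lemma lin_map_shiftn: "lin (\<lambda>x. shiftn n (L x)) f = shiftn n (lin L f)"
  by (simp add: lin_def shiftn_sum shiftn_sc)

lemma rmul_shift: "rmul_eta_b j (k, I, e) = shiftn k (rmul_eta_b j (0, I, e))"
  by (simp add: shiftn_sc shiftn_bv')

lemma nabla_b_shift: "nabla_b (k, I, e) = shiftn k (nabla_b (0, I, e))"
  by (simp only: nabla_b.simps shiftn_sum shiftn_sc rmul_shift[of _ k])

lemma nabla_b_shk: "nabla_b (shk n x) = shiftn n (nabla_b x)"
proof (cases x)
  case (fields k I e)
  show ?thesis unfolding fields shk.simps
    by (subst (1 2) nabla_b_shift) (simp add: shiftn_shiftn add.commute)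
qed

lemma nabla_shiftn: "nabla (shiftn n f) = shiftn n (nabla f)"
  unfolding nabla_def lin_shiftn nabla_b_shk lin_map_shiftn ..




type_synonym ckey = "nat \<times> nat list \<times> mon"
type_synonym gz = "int \<times> int"
type_synonym cel = "(ckey \<times> gz) list"

fun absk :: "ckey \<Rightarrow> key" where "absk (k, L, e) = (k, set L, e)"
definition canon :: "ckey \<Rightarrow> bool" where "canon x \<longleftrightarrow> sorted_wrt (<) (fst (snd x))"

definition gc :: "gz \<Rightarrow> complex" where "gc z = Complex (of_int (fst z)) (of_int (snd z))"
definition gval :: "gz \<Rightarrow> nat \<Rightarrow> complex" where "gval z k = gc z / 2 ^ (k + 4)"
definition gmul :: "gz \<Rightarrow> gz \<Rightarrow> gz" where
  "gmul z w = (fst z * fst w - snd z * snd w, fst z * snd w + snd z * fst w)"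
definition gadd :: "gz \<Rightarrow> gz \<Rightarrow> gz" where "gadd z w = (fst z + fst w, snd z + snd w)"

lemma gc_mul: "gc (gmul z w) = gc z * gc w"
  by (simp add: gc_def gmul_def complex_eq_iff)
lemma gc_add: "gc (gadd z w) = gc z + gc w"
  by (simp add: gc_def gadd_def complex_eq_iff)
lemma gc_zero [simp]: "gc (0, 0) = 0" by (simp add: gc_def complex_eq_iff)
lemma gc_real: "gc (d, 0) = of_int d" by (simp add: gc_def complex_eq_iff)

definition interp :: "cel \<Rightarrow> elt" where
  "interp xs = sum_list (map (\<lambda>(x, z). sc (gval z (fst x)) (bv (absk x))) xs)"

lemma interp_Nil [simp]: "interp [] = 0" by (simp add: interp_def)
lemma interp_Cons [simp]: "interp ((x, z) # xs) = sc (gval z (fst x)) (bv (absk x)) + interp xs"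
  by (simp add: interp_def)
lemma interp_append [simp]: "interp (xs @ ys) = interp xs + interp ys"
  by (simp add: interp_def)
lemma fs_interp [intro]: "fs (interp xs)"
  by (induction xs) (auto intro!: fs_add fs_sc)

definition gscale :: "gz \<Rightarrow> cel \<Rightarrow> cel" where
  "gscale d xs = map (\<lambda>(y, z). (y, gmul d z)) xs"

lemma interp_gscale [simp]: "interp (gscale d xs) = sc (gc d) (interp xs)"
  by (induction xs) (auto simp: gscale_def sc_add gval_def gc_mul)

lemma interp_concat: "interp (concat xss) = sum_list (map interp xss)"
  by (induction xss) auto

fun c_rmul :: "nat \<Rightarrow> ckey \<Rightarrow> cel" where
  "c_rmul j (k, L, e) =
     (let s = (if even (length (filter (\<lambda>i. j < i) L)) then 1 else -1) in
      if j \<notin> set L then [((k, insort j L, e), (s, 0))]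
      else [((Suc k, remove1 j L, e), (- s, 0))])"

lemma cnt_gt_list: "distinct L \<Longrightarrow> cnt_gt (set L) j = length (filter (\<lambda>i. j < i) L)"
proof -
  assume d: "distinct L"
  have "{i \<in> set L. j < i} = set (filter (\<lambda>i. j < i) L)" by auto
  moreover have "card (set (filter (\<lambda>i. j < i) L)) = length (filter (\<lambda>i. j < i) L)"
    by (rule distinct_card) (simp add: d)
  ultimately show ?thesis unfolding cnt_gt_def by simp
qed

lemma neg1_pow: "((-1::complex) ^ n) = (if even n then 1 else -1)"
  by simp

lemma c_rmul_sound:
  assumes "sorted_wrt (<) L"
  shows "interp (c_rmul j (k, L, e)) = sc (gval (1, 0) k) (rmul_eta_b j (k, set L, e))"
proof -
  have d: "distinct L" using assms strict_sorted_iff by blast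
  have c1: "Complex 1 0 = 1" "Complex (-1) 0 = -1" by (simp_all add: complex_eq_iff)
  show ?thesis using d
    by (auto simp: c1 power_add cnt_gt_list set_insort_key add_0_right gval_def gc_def Let_def neg1_pow
        power_Suc field_simps complex_eq_iff)
qed


definition tab8 :: "(nat \<times> nat \<times> nat \<times> gz) list" where
  "tab8 = [(1,1,1,(0,1)), (1,1,2,(1,0)), (1,2,3,(0,1)), (1,2,4,(-1,0)),
           (2,1,3,(0,1)), (2,1,4,(1,0)), (2,2,1,(0,-1)), (2,2,2,(1,0))]"

fun dci :: "nat \<Rightarrow> nat \<Rightarrow> mon \<Rightarrow> int" where
  "dci a b (p1, p2, q1, q2) = int (if a = 1 then p1 else p2) * int (if b = 1 then q1 else q2)"

lemma dci_dcoef: "of_int (dci a b e) = dcoef a b e"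
  by (cases e) simp

definition c_nabla_b :: "ckey \<Rightarrow> cel" where
  "c_nabla_b x = (case x of (k, L, e) \<Rightarrow> concat (map (\<lambda>(a, b, j, w).
      if dci a b e = 0 then [] else gscale (gmul w (dci a b e, 0)) (c_rmul j (k, L, dmon a b e))) tab8))"

lemma sum_tab8:
  "(\<Sum>a\<in>{1,2}. \<Sum>b\<in>{1,2}. \<Sum>j\<in>{1..4::nat}. sc (wc a b j * dcoef a b e) (R a b j)) =
   sum_list (map (\<lambda>(a, b, j, w). sc (gc w * dcoef a b e) (R a b j)) tab8)"
proof -
  have "{1..4::nat} = {1,2,3,4}" by auto
  moreover have "gc (0, 1) = \<i>" "gc (1, 0) = 1" "gc (-1, 0) = -1" "gc (0, -1) = - \<i>"
    by (simp_all add: gc_def complex_eq_iff)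
  ultimately show ?thesis by (simp add: tab8_def wc_def add.assoc)
qed

lemma c_nabla_b_sound:
  assumes "sorted_wrt (<) L"
  shows "interp (c_nabla_b (k, L, e)) = sc (gval (1, 0) k) (nabla_b (k, set L, e))"
proof -
  have "interp (c_nabla_b (k, L, e)) =
    sum_list (map (\<lambda>(a, b, j, w). sc (gc w * dcoef a b e) (interp (c_rmul j (k, L, dmon a b e)))) tab8)"
    unfolding c_nabla_b_def prod.case interp_concat map_map
    by (rule arg_cong[where f = sum_list], rule map_cong)
       (auto simp del: c_rmul.simps simp: gc_mul gc_real dci_dcoef[symmetric])
  also have "\<dots> = sum_list (map (\<lambda>(a, b, j, w). sc (gc w * dcoef a b e)
        (sc (gval (1, 0) k) (rmul_eta_b j (k, set L, dmon a b e)))) tab8)"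
    by (simp only: c_rmul_sound[OF assms])
  also have "\<dots> = sc (gval (1, 0) k) (nabla_b (k, set L, e))"
    by (simp only: nabla_b.simps sum_tab8) (simp add: tab8_def sc_add mult.commute)
  finally show ?thesis .
qed

definition c_lin :: "(ckey \<Rightarrow> cel) \<Rightarrow> cel \<Rightarrow> cel" where
  "c_lin F xs = concat (map (\<lambda>(x, z). gscale z (F x)) xs)"

lemma gc_gval: "gc z * gval (1, 0) k = gval z k"
  by (simp add: gval_def gc_def complex_eq_iff)

lemma interp_c_lin:
  "(\<And>x z. (x, z) \<in> set xs \<Longrightarrow> interp (F x) = sc (gval (1, 0) (fst x)) (G (absk x))) \<Longrightarrow>
   interp (c_lin F xs) = lin G (interp xs)"
proof (induction xs)
  case Nil then show ?case by (simp add: c_lin_def)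
next
  case (Cons p xs)
  obtain x z where p: "p = (x, z)" by (cases p)
  have "interp (c_lin F (p # xs)) = sc (gc z) (interp (F x)) + interp (c_lin F xs)"
    by (simp add: c_lin_def p)
  also have "\<dots> = sc (gval z (fst x)) (G (absk x)) + lin G (interp xs)"
  proof -
    have "interp (F x) = sc (gval (1, 0) (fst x)) (G (absk x))" using Cons.prems[of x z] p by simp
    moreover have "\<And>x z. (x, z) \<in> set xs \<Longrightarrow> interp (F x) = sc (gval (1, 0) (fst x)) (G (absk x))"
      using Cons.prems by (meson list.set_intros(2))
    then have "interp (c_lin F xs) = lin G (interp xs)" by (rule Cons.IH)
    ultimately show ?thesis by (simp add: gc_gval)
  qed
  also have "\<dots> = lin G (interp (p # xs))"
    by (simp add: p lin_add[OF fs_sc[OF fs_bv] fs_interp] lin_sc)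
  finally show ?case .
qed

definition c_nabla :: "cel \<Rightarrow> cel" where "c_nabla xs = c_lin c_nabla_b xs"

lemma c_nabla_sound:
  "list_all canon (map fst xs) \<Longrightarrow> interp (c_nabla xs) = nabla (interp xs)"
  unfolding c_nabla_def nabla_def
proof (rule interp_c_lin)
  fix x z assume "list_all canon (map fst xs)" "(x, z) \<in> set xs"
  then have "canon x" by (auto simp: list_all_iff)
  then show "interp (c_nabla_b x) = sc (gval (1, 0) (fst x)) (nabla_b (absk x))"
    by (cases x) (simp add: canon_def c_nabla_b_sound)
qed

definition coef :: "cel \<Rightarrow> ckey \<Rightarrow> gz" where
  "coef xs y = foldr gadd (map snd (filter (\<lambda>p. fst p = y) xs)) (0, 0)"

definition check_eq :: "cel \<Rightarrow> cel \<Rightarrow> bool" where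
  "check_eq xs ys \<longleftrightarrow> list_all canon (map fst xs) \<and> list_all canon (map fst ys) \<and>
     list_all (\<lambda>y. coef xs y = coef ys y) (map fst (xs @ ys))"

lemma interp_apply: "interp xs z = sum_list (map (\<lambda>p. gval (snd p) (fst (fst p))) (filter (\<lambda>p. absk (fst p) = z) xs))"
  by (induction xs) (auto simp: fun_apps sc_apply bv_apply)

lemma gval_add: "gval (gadd z w) k = gval z k + gval w k"
  by (simp add: gval_def gc_add add_divide_distrib)

lemma gval_zero: "gval (0, 0) k = 0" by (simp add: gval_def)

lemma coef_sum: "sum_list (map (\<lambda>p. gval (snd p) (fst (fst p))) (filter (\<lambda>p. fst p = y) xs)) = gval (coef xs y) (fst y)"
  by (induction xs) (auto simp: coef_def gval_add gval_zero)

lemma canon_ab_inj: "canon x \<Longrightarrow> canon y \<Longrightarrow> absk x = absk y \<Longrightarrow> x = y"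
  by (cases x; cases y) (auto simp: canon_def intro: strict_sorted_equal)

lemma check_eq_sound:
  assumes "check_eq xs ys"
  shows "interp xs = interp ys"
proof (rule ext)
  fix z
  have cx: "\<And>p. p \<in> set xs \<Longrightarrow> canon (fst p)" and cy: "\<And>p. p \<in> set ys \<Longrightarrow> canon (fst p)"
    using assms by (auto simp: check_eq_def list_all_iff)
  show "interp xs z = interp ys z"
  proof (cases "\<exists>y\<in>set (map fst (xs @ ys)). absk y = z")
    case True
    then obtain y where y: "y \<in> set (map fst (xs @ ys))" "absk y = z" by blast
    have cyy: "canon y" using y(1) cx cy by auto
    have ex: "\<And>p. p \<in> set xs \<Longrightarrow> (absk (fst p) = z) = (fst p = y)"
      using y(2) cyy cx canon_ab_inj by metis
    have ey: "\<And>p. p \<in> set ys \<Longrightarrow> (absk (fst p) = z) = (fst p = y)"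
      using y(2) cyy cy canon_ab_inj by metis
    have "filter (\<lambda>p. absk (fst p) = z) xs = filter (\<lambda>p. fst p = y) xs"
      by (rule filter_cong) (simp_all add: ex)
    moreover have "filter (\<lambda>p. absk (fst p) = z) ys = filter (\<lambda>p. fst p = y) ys"
      by (rule filter_cong) (simp_all add: ey)
    moreover have "coef xs y = coef ys y" using assms y(1) by (auto simp: check_eq_def list_all_iff)
    ultimately show ?thesis by (simp add: interp_apply coef_sum)
  next
    case False
    then have "filter (\<lambda>p. absk (fst p) = z) xs = []" "filter (\<lambda>p. absk (fst p) = z) ys = []"
      by (auto simp: filter_empty_conv)
    then show ?thesis by (simp add: interp_apply)
  qed
qed

definition c_shift :: "nat \<Rightarrow> cel \<Rightarrow> cel" where
  "c_shift n xs = map (\<lambda>((k, L, e), z). ((k + n, L, e), z)) xs"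

lemma interp_c_shift: "interp (c_shift n xs) = sc (1 / 2 ^ n) (shiftn n (interp xs))"
  by (induction xs) (auto simp: c_shift_def shiftn_add shiftn_sc shiftn_bv' sc_add gval_def power_add mult_ac)

definition valid_c :: "nat \<Rightarrow> nat \<Rightarrow> cel \<Rightarrow> bool" where
  "valid_c m n xs = list_all (\<lambda>(x, c). canon x \<and> list_all (\<lambda>i. 1 \<le> i \<and> i \<le> 4) (fst (snd x))
      \<and> bideg (snd (snd x)) = (m, n)) xs"

lemma valid_c_inM: "valid_c m n xs \<Longrightarrow> inM m n (interp xs)"
proof (induction xs)
  case (Cons p xs)
  obtain k L e c where p: "p = ((k, L, e), c)" by (cases p) auto
  have "set L \<subseteq> {1..4}" "bideg e = (m, n)" using Cons.prems by (auto simp: valid_c_def p list_all_iff)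
  then have "inM m n (bv (k, set L, e))" by (rule inM_bv)
  moreover have "valid_c m n xs" using Cons.prems by (simp add: valid_c_def)
  ultimately show ?case using Cons.IH by (simp add: p inM_add inM_sc)
qed simp

lemma valid_c_canon: "valid_c m n xs \<Longrightarrow> list_all canon (map fst xs)"
  by (induction xs) (auto simp: valid_c_def)

lemma sorted_list_of_set_canon: "sorted_wrt (<) L \<Longrightarrow> sorted_list_of_set (set L) = L"
  by (simp add: sorted_list_of_set_sort_remdups strict_sorted_iff distinct_remdups_id sorted_sort_id)




definition P0tab :: "(nat list \<times> cel) list" where
  "P0tab = [([1], [((0, [], (0, 1, 0, 1)), (0, 8)), ((0, [], (1, 0, 1, 0)), (0, (-8)))]),
    ([2], [((0, [], (0, 1, 0, 1)), (8, 0)), ((0, [], (1, 0, 1, 0)), (8, 0))]),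
    ([3], [((0, [], (0, 1, 1, 0)), (0, (-8))), ((0, [], (1, 0, 0, 1)), (0, (-8)))]),
    ([4], [((0, [], (0, 1, 1, 0)), (8, 0)), ((0, [], (1, 0, 0, 1)), ((-8), 0))]),
    ([1, 2], [((0, [1], (0, 1, 0, 1)), (8, 0)), ((0, [1], (1, 0, 1, 0)), (8, 0))]),
    ([1, 3], [((0, [1], (0, 1, 1, 0)), (0, (-8))), ((0, [1], (1, 0, 0, 1)), (0, (-8)))]),
    ([1, 4], [((0, [1], (0, 1, 1, 0)), (8, 0)), ((0, [1], (1, 0, 0, 1)), ((-8), 0))]),
    ([2, 3], [((0, [2], (0, 1, 1, 0)), (0, (-8))), ((0, [2], (1, 0, 0, 1)), (0, (-8)))]),
    ([2, 4], [((0, [2], (0, 1, 1, 0)), (8, 0)), ((0, [2], (1, 0, 0, 1)), ((-8), 0))]),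
    ([3, 4], [((0, [3], (0, 1, 1, 0)), (8, 0)), ((0, [3], (1, 0, 0, 1)), ((-8), 0))]),
    ([1, 2, 3], [((0, [1, 2], (0, 1, 1, 0)), (0, (-8))), ((0, [1, 2], (1, 0, 0, 1)), (0, (-8)))]),
    ([1, 2, 4], [((0, [1, 2], (0, 1, 1, 0)), (8, 0)), ((0, [1, 2], (1, 0, 0, 1)), ((-8), 0))]),
    ([1, 3, 4], [((0, [1, 3], (0, 1, 1, 0)), (8, 0)), ((0, [1, 3], (1, 0, 0, 1)), ((-8), 0))]),
    ([2, 3, 4], [((0, [2, 3], (0, 1, 1, 0)), (8, 0)), ((0, [2, 3], (1, 0, 0, 1)), ((-8), 0))]),
    ([1, 2, 3, 4], [((0, [1, 2, 3], (0, 1, 1, 0)), (8, 0)), ((0, [1, 2, 3], (1, 0, 0, 1)), ((-8), 0))])]"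

definition P1d :: cel where "P1d = [((0, [1], (0, 1, 0, 1)), (0, (-8))), ((0, [1], (1, 0, 1, 0)), (0, 8))]"

definition Htab :: "((nat list \<times> mon) \<times> cel) list" where
  "Htab = [(([2], (1, 0, 1, 0)), [((0, [], (2, 0, 2, 0)), (4, 0))]),
    (([2], (0, 1, 0, 1)), [((0, [], (0, 2, 0, 2)), (4, 0))]),
    (([3], (1, 0, 1, 0)), [((0, [], (1, 1, 2, 0)), (0, (-4))), ((0, [], (2, 0, 1, 1)), (0, (-4)))]),
    (([3], (1, 0, 0, 1)), [((0, [], (0, 2, 0, 2)), (0, 1)), ((0, [], (0, 2, 2, 0)), (0, (-1))), ((0, [], (1, 1, 1, 1)), (0, (-4))), ((0, [], (2, 0, 0, 2)), (0, (-1))), ((0, [], (2, 0, 2, 0)), (0, 1))]),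
    (([3], (0, 1, 1, 0)), [((0, [], (0, 2, 0, 2)), (0, 1)), ((0, [], (0, 2, 2, 0)), (0, (-1))), ((0, [], (1, 1, 1, 1)), (0, (-4))), ((0, [], (2, 0, 0, 2)), (0, (-1))), ((0, [], (2, 0, 2, 0)), (0, 1))]),
    (([3], (0, 1, 0, 1)), [((0, [], (0, 2, 1, 1)), (0, (-4))), ((0, [], (1, 1, 0, 2)), (0, (-4)))]),
    (([4], (1, 0, 1, 0)), [((0, [], (1, 1, 2, 0)), (4, 0)), ((0, [], (2, 0, 1, 1)), ((-4), 0))]),
    (([4], (1, 0, 0, 1)), [((0, [], (0, 2, 0, 2)), ((-1), 0)), ((0, [], (0, 2, 2, 0)), (1, 0)), ((0, [], (1, 1, 1, 1)), (4, 0)), ((0, [], (2, 0, 0, 2)), ((-3), 0)), ((0, [], (2, 0, 2, 0)), ((-1), 0))]),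
    (([4], (0, 1, 1, 0)), [((0, [], (0, 2, 0, 2)), (1, 0)), ((0, [], (0, 2, 2, 0)), (3, 0)), ((0, [], (1, 1, 1, 1)), ((-4), 0)), ((0, [], (2, 0, 0, 2)), ((-1), 0)), ((0, [], (2, 0, 2, 0)), (1, 0))]),
    (([4], (0, 1, 0, 1)), [((0, [], (0, 2, 1, 1)), (4, 0)), ((0, [], (1, 1, 0, 2)), ((-4), 0))]),
    (([1, 2], (1, 0, 1, 0)), [((0, [1], (2, 0, 2, 0)), (4, 0))]),
    (([1, 2], (0, 1, 0, 1)), [((0, [1], (0, 2, 0, 2)), (4, 0))]),
    (([1, 3], (1, 0, 1, 0)), [((0, [1], (1, 1, 2, 0)), (0, (-4))), ((0, [1], (2, 0, 1, 1)), (0, (-4)))]),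
    (([1, 3], (1, 0, 0, 1)), [((0, [1], (0, 2, 0, 2)), (0, 1)), ((0, [1], (0, 2, 2, 0)), (0, (-1))), ((0, [1], (1, 1, 1, 1)), (0, (-4))), ((0, [1], (2, 0, 0, 2)), (0, (-1))), ((0, [1], (2, 0, 2, 0)), (0, 1))]),
    (([1, 3], (0, 1, 1, 0)), [((0, [1], (0, 2, 0, 2)), (0, 1)), ((0, [1], (0, 2, 2, 0)), (0, (-1))), ((0, [1], (1, 1, 1, 1)), (0, (-4))), ((0, [1], (2, 0, 0, 2)), (0, (-1))), ((0, [1], (2, 0, 2, 0)), (0, 1))]),
    (([1, 3], (0, 1, 0, 1)), [((0, [1], (0, 2, 1, 1)), (0, (-4))), ((0, [1], (1, 1, 0, 2)), (0, (-4)))]),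
    (([1, 4], (1, 0, 1, 0)), [((0, [1], (1, 1, 2, 0)), (4, 0)), ((0, [1], (2, 0, 1, 1)), ((-4), 0))]),
    (([1, 4], (1, 0, 0, 1)), [((0, [1], (0, 2, 0, 2)), ((-1), 0)), ((0, [1], (0, 2, 2, 0)), (1, 0)), ((0, [1], (1, 1, 1, 1)), (4, 0)), ((0, [1], (2, 0, 0, 2)), ((-3), 0)), ((0, [1], (2, 0, 2, 0)), ((-1), 0))]),
    (([1, 4], (0, 1, 1, 0)), [((0, [1], (0, 2, 0, 2)), (1, 0)), ((0, [1], (0, 2, 2, 0)), (3, 0)), ((0, [1], (1, 1, 1, 1)), ((-4), 0)), ((0, [1], (2, 0, 0, 2)), ((-1), 0)), ((0, [1], (2, 0, 2, 0)), (1, 0))]),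
    (([1, 4], (0, 1, 0, 1)), [((0, [1], (0, 2, 1, 1)), (4, 0)), ((0, [1], (1, 1, 0, 2)), ((-4), 0))]),
    (([2, 3], (1, 0, 1, 0)), [((0, [2], (1, 1, 2, 0)), (0, (-4))), ((0, [2], (2, 0, 1, 1)), (0, (-4)))]),
    (([2, 3], (1, 0, 0, 1)), [((0, [1], (0, 2, 0, 2)), (1, 0)), ((0, [1], (2, 0, 2, 0)), ((-1), 0)), ((0, [2], (0, 2, 2, 0)), (0, (-1))), ((0, [2], (1, 1, 1, 1)), (0, (-4))), ((0, [2], (2, 0, 0, 2)), (0, (-1)))]),
    (([2, 3], (0, 1, 1, 0)), [((0, [1], (0, 2, 0, 2)), (1, 0)), ((0, [1], (2, 0, 2, 0)), ((-1), 0)), ((0, [2], (0, 2, 2, 0)), (0, (-1))), ((0, [2], (1, 1, 1, 1)), (0, (-4))), ((0, [2], (2, 0, 0, 2)), (0, (-1)))]),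
    (([2, 3], (0, 1, 0, 1)), [((0, [2], (0, 2, 1, 1)), (0, (-4))), ((0, [2], (1, 1, 0, 2)), (0, (-4)))]),
    (([2, 4], (1, 0, 1, 0)), [((0, [2], (1, 1, 2, 0)), (4, 0)), ((0, [2], (2, 0, 1, 1)), ((-4), 0))]),
    (([2, 4], (1, 0, 0, 1)), [((0, [1], (0, 2, 0, 2)), (0, 1)), ((0, [1], (2, 0, 2, 0)), (0, (-1))), ((0, [2], (0, 2, 2, 0)), (1, 0)), ((0, [2], (1, 1, 1, 1)), (4, 0)), ((0, [2], (2, 0, 0, 2)), ((-3), 0))]),
    (([2, 4], (0, 1, 1, 0)), [((0, [1], (0, 2, 0, 2)), (0, (-1))), ((0, [1], (2, 0, 2, 0)), (0, 1)), ((0, [2], (0, 2, 2, 0)), (3, 0)), ((0, [2], (1, 1, 1, 1)), ((-4), 0)), ((0, [2], (2, 0, 0, 2)), ((-1), 0))]),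
    (([2, 4], (0, 1, 0, 1)), [((0, [2], (0, 2, 1, 1)), (4, 0)), ((0, [2], (1, 1, 0, 2)), ((-4), 0))]),
    (([3, 4], (1, 0, 1, 0)), [((0, [1], (0, 2, 2, 0)), (1, 0)), ((0, [1], (1, 1, 1, 1)), (4, 0)), ((0, [1], (2, 0, 0, 2)), (1, 0)), ((0, [1], (2, 0, 2, 0)), ((-2), 0)), ((0, [2], (0, 2, 2, 0)), (0, (-1))), ((0, [2], (1, 1, 1, 1)), (0, (-4))), ((0, [2], (2, 0, 0, 2)), (0, (-1))), ((0, [3], (1, 1, 2, 0)), (8, 0))]),
    (([3, 4], (1, 0, 0, 1)), [((0, [1], (0, 2, 1, 1)), (4, 0)), ((0, [1], (1, 1, 0, 2)), (4, 0)), ((0, [1], (1, 1, 2, 0)), ((-4), 0)), ((0, [1], (2, 0, 1, 1)), ((-4), 0)), ((0, [2], (0, 2, 1, 1)), (0, (-4))), ((0, [2], (1, 1, 0, 2)), (0, (-4))), ((0, [2], (1, 1, 2, 0)), (0, (-4))), ((0, [2], (2, 0, 1, 1)), (0, (-4))), ((0, [3], (0, 2, 2, 0)), (4, 0)), ((0, [3], (1, 1, 1, 1)), (16, 0))]),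
    (([3, 4], (0, 1, 1, 0)), [((0, [3], (0, 2, 2, 0)), (4, 0))]),
    (([3, 4], (0, 1, 0, 1)), [((0, [1], (0, 2, 0, 2)), (2, 0)), ((0, [1], (0, 2, 2, 0)), ((-1), 0)), ((0, [1], (1, 1, 1, 1)), ((-4), 0)), ((0, [1], (2, 0, 0, 2)), ((-1), 0)), ((0, [2], (0, 2, 2, 0)), (0, (-1))), ((0, [2], (1, 1, 1, 1)), (0, (-4))), ((0, [2], (2, 0, 0, 2)), (0, (-1))), ((0, [3], (0, 2, 1, 1)), (8, 0))]),
    (([1, 2, 3], (1, 0, 1, 0)), [((0, [1, 2], (1, 1, 2, 0)), (0, (-4))), ((0, [1, 2], (2, 0, 1, 1)), (0, (-4)))]),
    (([1, 2, 3], (1, 0, 0, 1)), [((0, [1, 2], (0, 2, 2, 0)), (0, (-1))), ((0, [1, 2], (1, 1, 1, 1)), (0, (-4))), ((0, [1, 2], (2, 0, 0, 2)), (0, (-1))), ((1, [], (0, 2, 0, 2)), ((-1), 0)), ((1, [], (2, 0, 2, 0)), (1, 0))]),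
    (([1, 2, 3], (0, 1, 1, 0)), [((0, [1, 2], (0, 2, 2, 0)), (0, (-1))), ((0, [1, 2], (1, 1, 1, 1)), (0, (-4))), ((0, [1, 2], (2, 0, 0, 2)), (0, (-1))), ((1, [], (0, 2, 0, 2)), ((-1), 0)), ((1, [], (2, 0, 2, 0)), (1, 0))]),
    (([1, 2, 3], (0, 1, 0, 1)), [((0, [1, 2], (0, 2, 1, 1)), (0, (-4))), ((0, [1, 2], (1, 1, 0, 2)), (0, (-4)))]),
    (([1, 2, 4], (1, 0, 1, 0)), [((0, [1, 2], (1, 1, 2, 0)), (4, 0)), ((0, [1, 2], (2, 0, 1, 1)), ((-4), 0))]),
    (([1, 2, 4], (1, 0, 0, 1)), [((0, [1, 2], (0, 2, 2, 0)), (1, 0)), ((0, [1, 2], (1, 1, 1, 1)), (4, 0)), ((0, [1, 2], (2, 0, 0, 2)), ((-3), 0)), ((1, [], (0, 2, 0, 2)), (0, (-1))), ((1, [], (2, 0, 2, 0)), (0, 1))]),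
    (([1, 2, 4], (0, 1, 1, 0)), [((0, [1, 2], (0, 2, 2, 0)), (3, 0)), ((0, [1, 2], (1, 1, 1, 1)), ((-4), 0)), ((0, [1, 2], (2, 0, 0, 2)), ((-1), 0)), ((1, [], (0, 2, 0, 2)), (0, 1)), ((1, [], (2, 0, 2, 0)), (0, (-1)))]),
    (([1, 2, 4], (0, 1, 0, 1)), [((0, [1, 2], (0, 2, 1, 1)), (4, 0)), ((0, [1, 2], (1, 1, 0, 2)), ((-4), 0))]),
    (([1, 3, 4], (1, 0, 1, 0)), [((0, [1, 2], (0, 2, 2, 0)), (0, (-1))), ((0, [1, 2], (1, 1, 1, 1)), (0, (-4))), ((0, [1, 2], (2, 0, 0, 2)), (0, (-1))), ((0, [1, 3], (1, 1, 2, 0)), (8, 0)), ((1, [], (0, 2, 2, 0)), ((-1), 0)), ((1, [], (1, 1, 1, 1)), ((-4), 0)), ((1, [], (2, 0, 0, 2)), ((-1), 0)), ((1, [], (2, 0, 2, 0)), (2, 0))]),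
    (([1, 3, 4], (1, 0, 0, 1)), [((0, [1, 2], (0, 2, 1, 1)), (0, (-4))), ((0, [1, 2], (1, 1, 0, 2)), (0, (-4))), ((0, [1, 2], (1, 1, 2, 0)), (0, (-4))), ((0, [1, 2], (2, 0, 1, 1)), (0, (-4))), ((0, [1, 3], (0, 2, 2, 0)), (4, 0)), ((0, [1, 3], (1, 1, 1, 1)), (16, 0)), ((1, [], (0, 2, 1, 1)), ((-4), 0)), ((1, [], (1, 1, 0, 2)), ((-4), 0)), ((1, [], (1, 1, 2, 0)), (4, 0)), ((1, [], (2, 0, 1, 1)), (4, 0))]),
    (([1, 3, 4], (0, 1, 1, 0)), [((0, [1, 3], (0, 2, 2, 0)), (4, 0))]),
    (([1, 3, 4], (0, 1, 0, 1)), [((0, [1, 2], (0, 2, 2, 0)), (0, (-1))), ((0, [1, 2], (1, 1, 1, 1)), (0, (-4))), ((0, [1, 2], (2, 0, 0, 2)), (0, (-1))), ((0, [1, 3], (0, 2, 1, 1)), (8, 0)), ((1, [], (0, 2, 0, 2)), ((-2), 0)), ((1, [], (0, 2, 2, 0)), (1, 0)), ((1, [], (1, 1, 1, 1)), (4, 0)), ((1, [], (2, 0, 0, 2)), (1, 0))]),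
    (([2, 3, 4], (1, 0, 1, 0)), [((0, [1, 2], (0, 2, 2, 0)), ((-1), 0)), ((0, [1, 2], (1, 1, 1, 1)), ((-4), 0)), ((0, [1, 2], (2, 0, 0, 2)), ((-1), 0)), ((0, [2, 3], (1, 1, 2, 0)), (8, 0)), ((1, [], (0, 2, 2, 0)), (0, 1)), ((1, [], (1, 1, 1, 1)), (0, 4)), ((1, [], (2, 0, 0, 2)), (0, 1)), ((1, [], (2, 0, 2, 0)), (0, 2))]),
    (([2, 3, 4], (1, 0, 0, 1)), [((0, [1, 2], (0, 2, 1, 1)), ((-4), 0)), ((0, [1, 2], (1, 1, 0, 2)), ((-4), 0)), ((0, [1, 2], (1, 1, 2, 0)), (4, 0)), ((0, [1, 2], (2, 0, 1, 1)), (4, 0)), ((0, [2, 3], (0, 2, 2, 0)), (4, 0)), ((0, [2, 3], (1, 1, 1, 1)), (16, 0)), ((1, [], (0, 2, 1, 1)), (0, 4)), ((1, [], (1, 1, 0, 2)), (0, 4)), ((1, [], (1, 1, 2, 0)), (0, 4)), ((1, [], (2, 0, 1, 1)), (0, 4))]),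
    (([2, 3, 4], (0, 1, 1, 0)), [((0, [2, 3], (0, 2, 2, 0)), (4, 0))]),
    (([2, 3, 4], (0, 1, 0, 1)), [((0, [1, 2], (0, 2, 2, 0)), (1, 0)), ((0, [1, 2], (1, 1, 1, 1)), (4, 0)), ((0, [1, 2], (2, 0, 0, 2)), (1, 0)), ((0, [2, 3], (0, 2, 1, 1)), (8, 0)), ((1, [], (0, 2, 0, 2)), (0, 2)), ((1, [], (0, 2, 2, 0)), (0, 1)), ((1, [], (1, 1, 1, 1)), (0, 4)), ((1, [], (2, 0, 0, 2)), (0, 1))]),
    (([1, 2, 3, 4], (1, 0, 1, 0)), [((0, [1, 2, 3], (1, 1, 2, 0)), (8, 0)), ((1, [1], (0, 2, 2, 0)), (0, 1)), ((1, [1], (1, 1, 1, 1)), (0, 4)), ((1, [1], (2, 0, 0, 2)), (0, 1)), ((1, [1], (2, 0, 2, 0)), (0, 2)), ((1, [2], (0, 2, 2, 0)), (1, 0)), ((1, [2], (1, 1, 1, 1)), (4, 0)), ((1, [2], (2, 0, 0, 2)), (1, 0))]),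
    (([1, 2, 3, 4], (1, 0, 0, 1)), [((0, [1, 2, 3], (0, 2, 2, 0)), (4, 0)), ((0, [1, 2, 3], (1, 1, 1, 1)), (16, 0)), ((1, [1], (0, 2, 1, 1)), (0, 4)), ((1, [1], (1, 1, 0, 2)), (0, 4)), ((1, [1], (1, 1, 2, 0)), (0, 4)), ((1, [1], (2, 0, 1, 1)), (0, 4)), ((1, [2], (0, 2, 1, 1)), (4, 0)), ((1, [2], (1, 1, 0, 2)), (4, 0)), ((1, [2], (1, 1, 2, 0)), ((-4), 0)), ((1, [2], (2, 0, 1, 1)), ((-4), 0))]),
    (([1, 2, 3, 4], (0, 1, 1, 0)), [((0, [1, 2, 3], (0, 2, 2, 0)), (4, 0))]),
    (([1, 2, 3, 4], (0, 1, 0, 1)), [((0, [1, 2, 3], (0, 2, 1, 1)), (8, 0)), ((1, [1], (0, 2, 0, 2)), (0, 2)), ((1, [1], (0, 2, 2, 0)), (0, 1)), ((1, [1], (1, 1, 1, 1)), (0, 4)), ((1, [1], (2, 0, 0, 2)), (0, 1)), ((1, [2], (0, 2, 2, 0)), ((-1), 0)), ((1, [2], (1, 1, 1, 1)), ((-4), 0)), ((1, [2], (2, 0, 0, 2)), ((-1), 0))])]"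

definition P0c :: "nat list \<Rightarrow> cel" where
  "P0c L = (case map_of P0tab L of Some v \<Rightarrow> v | None \<Rightarrow> [])"

fun c_pre :: "ckey \<Rightarrow> cel" where
  "c_pre (k, L, e) = (if L = [] then (if k = 0 then [] else c_shift (k - 1) P1d) else c_shift k (P0c L))"

definition Hc :: "ckey \<Rightarrow> cel" where
  "Hc x = (case map_of Htab (fst (snd x), snd (snd x)) of Some v \<Rightarrow> v | None \<Rightarrow> [])"

definition subs :: "nat list list" where "subs = subseqs [1, 2, 3, 4]"
definition mons11 :: "mon list" where "mons11 = [(1,0,1,0), (1,0,0,1), (0,1,1,0), (0,1,0,1)]"
definition mons22 :: "mon list" where "mons22 = [(a, 2 - a, b, 2 - b). a \<leftarrow> [0, 1, 2], b \<leftarrow> [0, 1, 2]]"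

definition chkP :: bool where
  "chkP \<longleftrightarrow> list_all (\<lambda>L. sorted_wrt (<) L \<and> (L = [] \<or> (valid_c 1 1 (P0c L) \<and>
       check_eq (c_nabla (P0c L)) [((0, L, (0, 0, 0, 0)), (16, 0))]))) subs \<and>
     valid_c 1 1 P1d \<and> check_eq (c_nabla P1d) [((1, [], (0, 0, 0, 0)), (16, 0))]"

definition chkSq :: "nat list \<Rightarrow> bool" where
  "chkSq L \<longleftrightarrow> list_all (\<lambda>e. list_all canon (map fst (c_nabla_b (0, L, e))) \<and>
       check_eq (c_nabla (c_nabla_b (0, L, e))) []) mons22"

definition chkH :: "nat list \<Rightarrow> bool" where
  "chkH L \<longleftrightarrow> list_all (\<lambda>e. valid_c 2 2 (Hc (0, L, e)) \<and> list_all canon (map fst (c_nabla_b (0, L, e))) \<and>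
       check_eq (c_nabla (Hc (0, L, e))) (((0, L, e), (16, 0)) # gscale (-1, 0) (c_lin c_pre (c_nabla_b (0, L, e))))) mons11"




lemma subs_eq: "subs = [[1, 2, 3, 4], [1, 2, 3], [1, 2, 4], [1, 2], [1, 3, 4], [1, 3], [1, 4], [1], [2, 3, 4], [2, 3], [2, 4], [2], [3, 4], [3], [4], []]"
  by (simp add: subs_def)
lemma chkP_ok: "chkP" by code_simp
lemma P0tab_valid: "list_all (\<lambda>p. valid_c 1 1 (snd p)) P0tab" by code_simp
lemma Htab_valid: "list_all (\<lambda>p. valid_c 2 2 (snd p)) Htab" by code_simp
lemma chkSq_0: "chkSq [1, 2, 3, 4]" by code_simp
lemma chkH_0: "chkH [1, 2, 3, 4]" by code_simp
lemma chkSq_1: "chkSq [1, 2, 3]" by code_simp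
lemma chkH_1: "chkH [1, 2, 3]" by code_simp
lemma chkSq_2: "chkSq [1, 2, 4]" by code_simp
lemma chkH_2: "chkH [1, 2, 4]" by code_simp
lemma chkSq_3: "chkSq [1, 2]" by code_simp
lemma chkH_3: "chkH [1, 2]" by code_simp
lemma chkSq_4: "chkSq [1, 3, 4]" by code_simp
lemma chkH_4: "chkH [1, 3, 4]" by code_simp
lemma chkSq_5: "chkSq [1, 3]" by code_simp
lemma chkH_5: "chkH [1, 3]" by code_simp
lemma chkSq_6: "chkSq [1, 4]" by code_simp
lemma chkH_6: "chkH [1, 4]" by code_simp
lemma chkSq_7: "chkSq [1]" by code_simp
lemma chkH_7: "chkH [1]" by code_simp
lemma chkSq_8: "chkSq [2, 3, 4]" by code_simp
lemma chkH_8: "chkH [2, 3, 4]" by code_simp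
lemma chkSq_9: "chkSq [2, 3]" by code_simp
lemma chkH_9: "chkH [2, 3]" by code_simp
lemma chkSq_10: "chkSq [2, 4]" by code_simp
lemma chkH_10: "chkH [2, 4]" by code_simp
lemma chkSq_11: "chkSq [2]" by code_simp
lemma chkH_11: "chkH [2]" by code_simp
lemma chkSq_12: "chkSq [3, 4]" by code_simp
lemma chkH_12: "chkH [3, 4]" by code_simp
lemma chkSq_13: "chkSq [3]" by code_simp
lemma chkH_13: "chkH [3]" by code_simp
lemma chkSq_14: "chkSq [4]" by code_simp
lemma chkH_14: "chkH [4]" by code_simp
lemma chkSq_15: "chkSq []" by code_simp
lemma chkH_15: "chkH []" by code_simp
lemma chkSq_all: "L \<in> set subs \<Longrightarrow> chkSq L"
  unfolding subs_eq using chkSq_0 chkSq_1 chkSq_2 chkSq_3 chkSq_4 chkSq_5 chkSq_6 chkSq_7 chkSq_8 chkSq_9 chkSq_10 chkSq_11 chkSq_12 chkSq_13 chkSq_14 chkSq_15 by auto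
lemma chkH_all: "L \<in> set subs \<Longrightarrow> chkH L"
  unfolding subs_eq using chkH_0 chkH_1 chkH_2 chkH_3 chkH_4 chkH_5 chkH_6 chkH_7 chkH_8 chkH_9 chkH_10 chkH_11 chkH_12 chkH_13 chkH_14 chkH_15 by auto



lemma subs_cover: "I \<subseteq> {1..4} \<Longrightarrow> \<exists>L\<in>set subs. set L = I"
proof -
  assume "I \<subseteq> {1..4}"
  moreover have "{1..4::nat} = set [1, 2, 3, 4]" by auto
  ultimately have "I \<in> set ` set subs" unfolding subs_def subseqs_powset by auto
  then show ?thesis by auto
qed

lemma subs_sorted: "L \<in> set subs \<Longrightarrow> sorted_wrt (<) L"
  using chkP_ok by (auto simp: chkP_def list_all_iff)

lemma canon_of:
  assumes "I \<subseteq> {1..4}"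
  shows "sorted_list_of_set I \<in> set subs" "set (sorted_list_of_set I) = I"
    "sorted_wrt (<) (sorted_list_of_set I)"
proof -
  obtain L where L: "L \<in> set subs" "set L = I" using subs_cover[OF assms] by blast
  have s: "sorted_wrt (<) L" using subs_sorted[OF L(1)] .
  have eq: "sorted_list_of_set I = L" using sorted_list_of_set_canon[OF s] L(2) by simp
  show "sorted_list_of_set I \<in> set subs" "set (sorted_list_of_set I) = I"
    "sorted_wrt (<) (sorted_list_of_set I)" using L s eq by auto
qed

lemma P0c_valid: "valid_c 1 1 (P0c L)"
proof (cases "map_of P0tab L")
  case None then show ?thesis by (simp add: P0c_def valid_c_def)
next
  case (Some v)
  then have "(L, v) \<in> set P0tab" by (rule map_of_SomeD)
  then have "valid_c 1 1 v" using P0tab_valid by (auto simp: list_all_iff)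
  then show ?thesis using Some by (simp add: P0c_def)
qed

lemma Hc_valid: "valid_c 2 2 (Hc x)"
proof (cases "map_of Htab (fst (snd x), snd (snd x))")
  case None then show ?thesis by (simp add: Hc_def valid_c_def)
next
  case (Some v)
  then have "((fst (snd x), snd (snd x)), v) \<in> set Htab" by (rule map_of_SomeD)
  then have "valid_c 2 2 v" using Htab_valid by (auto simp: list_all_iff)
  then show ?thesis using Some by (simp add: Hc_def)
qed

lemma P1d_valid: "valid_c 1 1 P1d" using chkP_ok by (simp add: chkP_def)

definition pre :: "key \<Rightarrow> elt" where
  "pre x = (case x of (k, I, e) \<Rightarrow> if I = {} then (if k = 0 then 0 else shiftn (k - 1) (sc 2 (interp P1d)))
      else shiftn k (interp (P0c (sorted_list_of_set I))))"

lemma pre_inM: "inM 1 1 (pre x)"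
proof -
  have v0: "\<And>L. inM 1 1 (interp (P0c L))" using valid_c_inM[OF P0c_valid] .
  have v1: "inM 1 1 (sc 2 (interp P1d))" by (rule inM_sc, rule valid_c_inM[OF P1d_valid])
  obtain k I e where x: "x = (k, I, e)" by (cases x) auto
  consider "I = {}" "k = 0" | "I = {}" "k \<noteq> 0" | "I \<noteq> {}" by blast
  then show ?thesis
  proof cases
    case 1 then have "pre x = 0" by (simp add: pre_def x)
    then show ?thesis by simp
  next
    case 2 then have "pre x = shiftn (k - 1) (sc 2 (interp P1d))" by (simp add: pre_def x)
    then show ?thesis using inM_shiftn[OF v1] by simp
  next
    case 3 then have "pre x = shiftn k (interp (P0c (sorted_list_of_set I)))" by (simp add: pre_def x)
    then show ?thesis using inM_shiftn[OF v0] by simp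
  qed
qed

lemma fs_pre: "fs (pre x)" using pre_inM by (rule inM_fs)

lemma gg1: "gc (1, 0) = 1" by (simp add: gc_def complex_eq_iff)
lemma gg0: "(2::complex) ^ (k + 4) = 2 ^ k * 16" by (simp add: power_add)
lemma gg: "gval (1, 0) k * 16 = 1 / 2 ^ k" unfolding gval_def gg1 gg0 by simp
lemma gg2: "k > 0 \<Longrightarrow> gval (1, 0) k * (16 * 2) = 1 / 2 ^ (k - 1)"
proof -
  assume "k > 0"
  then obtain m where k: "k = Suc m" using gr0_implies_Suc by blast
  have "gval (1, 0) k * (16 * 2) = 1 / 2 ^ k * 2" by (simp only: gg mult.assoc[symmetric])
  also have "\<dots> = 1 / 2 ^ m" unfolding k by simp
  finally show ?thesis using k by simp
qed

lemma c_pre_sound: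
  assumes "sorted_wrt (<) L"
  shows "interp (c_pre (k, L, e)) = sc (gval (1, 0) k) (sc 16 (pre (k, set L, e)))"
proof -
  consider "L = []" "k = 0" | "L = []" "k \<noteq> 0" | "L \<noteq> []" by blast
  then show ?thesis
  proof cases
    case 1 then show ?thesis by (simp add: pre_def)
  next
    case 2
    then have p: "pre (k, set L, e) = shiftn (k - 1) (sc 2 (interp P1d))" by (simp add: pre_def)
    have i: "interp (c_pre (k, L, e)) = sc (1 / 2 ^ (k - 1)) (shiftn (k - 1) (interp P1d))"
      using 2 by (simp add: interp_c_shift)
    have c: "gval (1, 0) k * (16 * 2) = 1 / 2 ^ (k - 1)" using 2 gg2 by blast
    show ?thesis unfolding p i by (simp only: shiftn_sc sc_sc c mult.assoc)
  next
    case 3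
    then have p: "pre (k, set L, e) = shiftn k (interp (P0c L))"
      using assms by (simp add: pre_def sorted_list_of_set_canon)
    have i: "interp (c_pre (k, L, e)) = sc (1 / 2 ^ k) (shiftn k (interp (P0c L)))"
      using 3 by (simp add: interp_c_shift)
    show ?thesis unfolding p i by (simp only: sc_sc gg)
  qed
qed

lemma c_linpre:
  assumes "list_all canon (map fst xs)"
  shows "interp (c_lin c_pre xs) = sc 16 (lin pre (interp xs))"
proof -
  have "interp (c_lin c_pre xs) = lin (\<lambda>x. sc 16 (pre x)) (interp xs)"
  proof (rule interp_c_lin)
    fix x z assume "(x, z) \<in> set xs"
    then have "canon x" using assms by (auto simp: list_all_iff)
    then show "interp (c_pre x) = sc (gval (1, 0) (fst x)) (sc 16 (pre (absk x)))"
    proof (cases x)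
      case (fields k L e)
      then have "sorted_wrt (<) L" using \<open>canon x\<close> by (simp add: canon_def)
      then show ?thesis by (simp only: fields fst_conv absk.simps c_pre_sound)
    qed
  qed
  then show ?thesis by (simp add: lin_fun_shift)
qed

lemma nabla_sc: "nabla (sc c f) = sc c (nabla f)" by (simp add: nabla_def lin_sc)

lemma gval16: "gval (16, 0) 0 = 1" "gval (16, 0) 1 = 1 / 2" "gval (1, 0) 0 = 1 / 16" "gval (16, 0) (Suc 0) = 1 / 2"
  by (simp_all add: gval_def gc_real)

lemma pre_nabla:
  assumes "I \<subseteq> {1..4}" "(k, I) \<noteq> (0, {})"
  shows "nabla (pre (k, I, e)) = bv (k, I, (0, 0, 0, 0))"
proof (cases "I = {}")
  case True
  then have k: "k > 0" using assms by auto
  have c: "check_eq (c_nabla P1d) [((1, [], (0, 0, 0, 0)), (16, 0))]" using chkP_ok by (simp add: chkP_def)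
  have "nabla (interp P1d) = interp (c_nabla P1d)"
    by (rule c_nabla_sound[symmetric]) (rule valid_c_canon[OF P1d_valid])
  also have "\<dots> = sc (1 / 2) (bv (1, {}, (0, 0, 0, 0)))" using check_eq_sound[OF c] by (simp add: gval16)
  finally have "nabla (interp P1d) = sc (1 / 2) (bv (1, {}, (0, 0, 0, 0)))" .
  then show ?thesis using True k
    by (simp add: pre_def nabla_shiftn nabla_sc shiftn_bv')
next
  case False
  let ?L = "sorted_list_of_set I"
  have L: "?L \<in> set subs" "set ?L = I" "sorted_wrt (<) ?L" using canon_of[OF assms(1)] by auto
  have "?L \<noteq> []" using L(2) False by auto
  then have c: "check_eq (c_nabla (P0c ?L)) [((0, ?L, (0, 0, 0, 0)), (16, 0))]"
    using chkP_ok L(1) by (auto simp: chkP_def list_all_iff)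
  have "nabla (interp (P0c ?L)) = interp (c_nabla (P0c ?L))"
    by (rule c_nabla_sound[symmetric]) (rule valid_c_canon[OF P0c_valid])
  also have "\<dots> = bv (0, I, (0, 0, 0, 0))" using check_eq_sound[OF c] L(2) by (simp add: gval16)
  finally show ?thesis using False by (simp add: pre_def nabla_shiftn shiftn_bv')
qed

lemma pre_shift:
  assumes "(k, I) \<noteq> (0, {})"
  shows "pre (k + n, I, e) = shiftn n (pre (k, I, e))"
  using assms by (auto simp: pre_def shiftn_shiftn shiftn_sc) (simp_all add: add.commute)


lemma fs_supp_decomp: "x \<in> supp f \<Longrightarrow> f x \<noteq> 0" by (simp add: supp_def)

lemma img_sub: "inM 1 1 f \<Longrightarrow> inM 0 0 (nabla f) \<and> nabla f (0, {}, (0, 0, 0, 0)) = 0"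
  using nabla_inM[of 1 1 f] nabla_z by simp

lemma img_sup:
  assumes "inM 0 0 g" "g (0, {}, (0, 0, 0, 0)) = 0"
  shows "g \<in> nabla ` {f. inM 1 1 f}"
proof -
  have fg: "fs g" using assms(1) by (rule inM_fs)
  let ?f = "lin pre g"
  have "inM 1 1 ?f" by (rule inM_lin[OF fg pre_inM])
  moreover have "nabla ?f = g"
  proof -
    have "nabla ?f = lin (\<lambda>x. nabla (pre x)) g"
      unfolding nabla_def by (rule lin_lin[OF fg fs_pre])
    also have "\<dots> = lin bv g"
    proof (rule lin_cong)
      fix x assume x: "x \<in> supp g"
      obtain k I e where xe: "x = (k, I, e)" by (cases x) auto
      have v: "I \<subseteq> {1..4}" "bideg e = (0, 0)" using inM_supp[OF assms(1)] x xe by auto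
      have e0: "e = (0, 0, 0, 0)" using v(2) by (cases e) auto
      have "(k, I) \<noteq> (0, {})" using x xe e0 assms(2) by (auto simp: supp_def)
      then show "nabla (pre x) = bv x" using pre_nabla[OF v(1)] xe e0 by simp
    qed
    also have "\<dots> = g" by (rule lin_bv_id[OF fg])
    finally show ?thesis .
  qed
  ultimately show ?thesis by (intro image_eqI[of g nabla ?f]) auto
qed

lemma img_char: "nabla ` {f. inM 1 1 f} = {g. inM 0 0 g \<and> g (0, {}, (0, 0, 0, 0)) = 0}"
  using img_sub img_sup by blast


abbreviation z0 :: key where "z0 \<equiv> (0, {}, (0, 0, 0, 0))"

lemma lin_z0: "(\<And>x. L x z0 = 0) \<Longrightarrow> lin L f z0 = 0"
  by (simp add: lin_apply)

lemma theta_z0: "theta_b x z0 = 0" by (cases x) (simp add: bv_def)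
lemma lmul_z0: "lmul_eta_b j x z0 = 0" by (cases x) (auto simp: sc_apply bv_def)

lemma neg_deg:
  assumes "gvalid b" "gdeg b < 0"
  shows "b = Tb 0 {} \<or> (\<exists>j\<in>{1..4}. b = Tb 0 {j})"
proof (cases b)
  case (Tb m I)
  have I: "I \<subseteq> {1..4}" using assms(1) Tb by simp
  then have fin: "finite I" using finite_subset by blast
  have "2 * int m + int (card I) < 2" using assms(2) Tb by simp
  then have m: "m = 0" and c: "card I \<le> 1" by auto
  show ?thesis
  proof (cases "card I = 0")
    case True then have "I = {}" using fin by simp
    then show ?thesis using Tb m by simp
  next
    case False
    then have "card I = 1" using c by simp
    then obtain j where "I = {j}" using card_1_singletonE by blast
    then show ?thesis using Tb m I by auto
  qed
next
  case Cb then show ?thesis using assms by simp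
qed

lemma br_valid:
  assumes "gvalid b1" "gvalid b2" "br b1 b2 b \<noteq> 0"
  shows "gvalid b"
proof (cases b)
  case (Tb p K) note bb = this
  show ?thesis
  proof (rule ccontr)
    assume nv: "\<not> gvalid b"
    then have K: "\<not> K \<subseteq> {1..4}" using bb by simp
    show False
    proof (cases b1)
      case (Tb m I) note b1 = this
      show False
      proof (cases b2)
        case (Tb n J) note b2 = this
        have I: "I \<subseteq> {1..4}" and J: "J \<subseteq> {1..4}" using assms(1,2) b1 b2 by auto
        have "K \<noteq> I \<union> J" using I J K by auto
        moreover have "\<And>i. (I - {i}) \<union> (J - {i}) \<noteq> K" using I J K by auto
        ultimately have "br b1 b2 b = 0" using b1 b2 bb by simp
        then show False using assms(3) by simp
      next
        case Cb then show False using assms(3) b1 bb by simp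
      qed
    next
      case Cb then show False using assms(3) by simp
    qed
  qed
next
  case Cb then show ?thesis by simp
qed

context
  fixes \<rho> :: "gb \<Rightarrow> elt \<Rightarrow> elt"
  assumes A: "induced_action_00 \<rho>"
begin

lemma A1: "gvalid b \<Longrightarrow> inM 0 0 f \<Longrightarrow> inM 0 0 (\<rho> b f)"
  using A by (simp add: induced_action_00_def inM00_def)
lemma A2: "gvalid b \<Longrightarrow> inM 0 0 f \<Longrightarrow> inM 0 0 g \<Longrightarrow> \<rho> b (f + g) = \<rho> b f + \<rho> b g"
  using A by (simp add: induced_action_00_def inM00_def)
lemma A2s: "gvalid b \<Longrightarrow> inM 0 0 f \<Longrightarrow> \<rho> b (sc c f) = sc c (\<rho> b f)"
  using A by (simp add: induced_action_00_def inM00_def)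
lemma A3: "gvalid b1 \<Longrightarrow> gvalid b2 \<Longrightarrow> inM 0 0 f \<Longrightarrow>
  \<rho> b1 (\<rho> b2 f) - sc ((-1) ^ (gpar b1 * gpar b2)) (\<rho> b2 (\<rho> b1 f))
    = (\<Sum>b\<in>{b. br b1 b2 b \<noteq> 0}. sc (br b1 b2 b) (\<rho> b f))"
  using A by (simp add: induced_action_00_def inM00_def)
lemma A4: "inM 0 0 f \<Longrightarrow> \<rho> (Tb 0 {}) f = lin theta_b f"
  using A by (simp add: induced_action_00_def inM00_def)
lemma A5: "j \<in> {1..4} \<Longrightarrow> inM 0 0 f \<Longrightarrow> \<rho> (Tb 0 {j}) f = lin (lmul_eta_b j) f"
  using A unfolding induced_action_00_def inM00_def by blast
lemma A6: "gvalid b \<Longrightarrow> 0 \<le> gdeg b \<Longrightarrow> \<rho> b one00 = 0"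
  using A by (simp add: induced_action_00_def)

lemma aug_neg: "gvalid b \<Longrightarrow> gdeg b < 0 \<Longrightarrow> inM 0 0 f \<Longrightarrow> \<rho> b f z0 = 0"
  using neg_deg[of b] A4 A5 lin_z0 theta_z0 lmul_z0 by metis

lemma bracket_step:
  assumes b: "gvalid b" and b2: "gvalid b2" and f: "inM 0 0 f"
    and ih: "\<And>b'. gvalid b' \<Longrightarrow> \<rho> b' f z0 = 0"
    and n2: "\<And>g. inM 0 0 g \<Longrightarrow> \<rho> b2 g z0 = 0"
  shows "\<rho> b (\<rho> b2 f) z0 = 0"
proof -
  let ?S = "{b'. br b b2 b' \<noteq> 0}"
  have eq: "\<rho> b (\<rho> b2 f) = sc ((-1) ^ (gpar b * gpar b2)) (\<rho> b2 (\<rho> b f))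
            + (\<Sum>b'\<in>?S. sc (br b b2 b') (\<rho> b' f))"
    using A3[OF b b2 f] by (simp add: algebra_simps)
  have t1: "sc ((-1) ^ (gpar b * gpar b2)) (\<rho> b2 (\<rho> b f)) z0 = 0"
    using n2[OF A1[OF b f]] by (simp add: sc_apply)
  have t2: "(\<Sum>b'\<in>?S. sc (br b b2 b') (\<rho> b' f)) z0 = 0"
    unfolding sum_fun_apply
  proof (rule sum.neutral, rule ballI)
    fix b' assume "b' \<in> ?S"
    then have "gvalid b'" using br_valid[OF b b2] by simp
    then show "sc (br b b2 b') (\<rho> b' f) z0 = 0" using ih by (simp add: sc_apply)
  qed
  show ?thesis by (subst eq) (simp add: plus_fun_apply t1 t2)
qed

lemma inM00_bv: "I \<subseteq> {1..4} \<Longrightarrow> inM 0 0 (bv (k, I, (0, 0, 0, 0)))"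
  by (rule inM_bv) simp_all

lemma basis_case:
  "k + card I = n \<Longrightarrow> I \<subseteq> {1..4} \<Longrightarrow> gvalid b \<Longrightarrow> \<rho> b (bv (k, I, (0, 0, 0, 0))) z0 = 0"
proof (induction n arbitrary: k I b rule: less_induct)
  case (less n)
  note IH = less.IH
  have I: "I \<subseteq> {1..4}" using less.prems by simp
  have finI: "finite I" using I finite_subset by blast
  show ?case
  proof (cases "gdeg b < 0")
    case True then show ?thesis using aug_neg less.prems inM00_bv[OF I] by blast
  next
    case False
    then have dg: "0 \<le> gdeg b" by simp
    consider "k = 0" "I = {}" | "k > 0" | "k = 0" "I \<noteq> {}" by blast
    then show ?thesis
    proof cases
      case 1 then show ?thesis using A6[OF less.prems(3) dg] by (simp add: one00_def zero_fun_apply)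
    next
      case 2
      let ?f = "bv (k - 1, I, (0, 0, 0, 0))"
      have f: "inM 0 0 ?f" by (rule inM00_bv[OF I])
      have eqf: "bv (k, I, (0, 0, 0, 0)) = \<rho> (Tb 0 {}) ?f"
        using A4[OF f] 2 by simp
      have "\<rho> b (\<rho> (Tb 0 {}) ?f) z0 = 0"
      proof (rule bracket_step[OF less.prems(3) _ f])
        show "gvalid (Tb 0 {})" by simp
        fix b' assume "gvalid b'"
        then show "\<rho> b' ?f z0 = 0" using IH[of "k - 1 + card I" "k - 1" I b'] 2 less.prems by simp
      next
        fix g :: elt assume "inM 0 0 g"
        then show "\<rho> (Tb 0 {}) g z0 = 0" using A4 lin_z0 theta_z0 by metis
      qed
      then show ?thesis using eqf by simp
    next
      case 3
      define j where "j = Min I"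
      have jI: "j \<in> I" using 3 finI j_def by simp
      have jmin: "\<And>i. i \<in> I \<Longrightarrow> j \<le> i" using finI j_def by simp
      have j4: "j \<in> {1..4}" using jI I by auto
      let ?I' = "I - {j}"
      let ?f = "bv (0, ?I', (0, 0, 0, 0))"
      have I': "?I' \<subseteq> {1..4}" using I by auto
      have f: "inM 0 0 ?f" by (rule inM00_bv[OF I'])
      have cl: "cnt_lt ?I' j = 0" unfolding cnt_lt_def using jmin
        by (auto simp: card_eq_0_iff finI) (meson leD)
      have ins: "insert j ?I' = I" using jI by auto
      have eqf: "bv (0, I, (0, 0, 0, 0)) = \<rho> (Tb 0 {j}) ?f"
        using A5[OF j4 f] cl ins by simp
      have cardlt: "card ?I' < card I" by (rule card_Diff1_less[OF finI jI])
      have "\<rho> b (\<rho> (Tb 0 {j}) ?f) z0 = 0"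
      proof (rule bracket_step[OF less.prems(3) _ f])
        show "gvalid (Tb 0 {j})" using j4 by simp
        fix b' assume "gvalid b'"
        then show "\<rho> b' ?f z0 = 0" using IH[of "card ?I'" 0 ?I' b'] 3 less.prems cardlt I' by simp
      next
        fix g :: elt assume "inM 0 0 g"
        then show "\<rho> (Tb 0 {j}) g z0 = 0" using A5[OF j4] lin_z0 lmul_z0 by metis
      qed
      then show ?thesis using eqf 3 by simp
    qed
  qed
qed

lemma rho_zero: "gvalid b \<Longrightarrow> \<rho> b 0 = 0"
proof -
  assume b: "gvalid b"
  have "\<rho> b (0 + 0) = \<rho> b 0 + \<rho> b 0" by (rule A2[OF b]) simp_all
  then show ?thesis by simp
qed

lemma rho_sum:
  assumes b: "gvalid b" and fin: "finite S" and v: "\<And>x. x \<in> S \<Longrightarrow> inM 0 0 (h x)"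
  shows "\<rho> b (\<Sum>x\<in>S. sc (c x) (h x)) = (\<Sum>x\<in>S. sc (c x) (\<rho> b (h x)))"
  using fin v
proof (induction S rule: finite_induct)
  case empty then show ?case using rho_zero[OF b] by simp
next
  case (insert x F)
  have s: "inM 0 0 (\<Sum>x\<in>F. sc (c x) (h x))" using insert.prems by (intro inM_sum inM_sc) auto
  have hx: "inM 0 0 (h x)" using insert.prems by simp
  have "\<rho> b (\<Sum>x\<in>insert x F. sc (c x) (h x)) = \<rho> b (sc (c x) (h x) + (\<Sum>x\<in>F. sc (c x) (h x)))"
    using insert.hyps by simp
  also have "\<dots> = \<rho> b (sc (c x) (h x)) + \<rho> b (\<Sum>x\<in>F. sc (c x) (h x))"
    by (rule A2[OF b inM_sc[OF hx] s])
  also have "\<dots> = sc (c x) (\<rho> b (h x)) + (\<Sum>x\<in>F. sc (c x) (\<rho> b (h x)))"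
    using A2s[OF b hx] insert.IH insert.prems by simp
  finally show ?case using insert.hyps by simp
qed

lemma part2: "gvalid b \<Longrightarrow> inM 0 0 m \<Longrightarrow> \<rho> b m \<in> nabla ` {f. inM 1 1 f}"
proof -
  assume b: "gvalid b" and m: "inM 0 0 m"
  have fm: "fs m" using m by (rule inM_fs)
  have mdec: "m = (\<Sum>x\<in>supp m. sc (m x) (bv x))"
    using lin_bv_id[OF fm] by (simp add: lin_expand)
  have vx: "\<And>x. x \<in> supp m \<Longrightarrow> inM 0 0 (bv x) \<and> \<rho> b (bv x) z0 = 0"
  proof -
    fix x assume x: "x \<in> supp m"
    obtain k I e where xe: "x = (k, I, e)" by (cases x) auto
    have v: "I \<subseteq> {1..4}" "bideg e = (0, 0)" using inM_supp[OF m] x xe by auto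
    have e0: "e = (0, 0, 0, 0)" using v(2) by (cases e) auto
    show "inM 0 0 (bv x) \<and> \<rho> b (bv x) z0 = 0"
      using inM00_bv[OF v(1)] basis_case[OF refl v(1) b] xe e0 by simp
  qed
  have "\<rho> b m = (\<Sum>x\<in>supp m. sc (m x) (\<rho> b (bv x)))"
    by (subst mdec, rule rho_sum[OF b]) (use fm vx in \<open>auto simp: fs_def\<close>)
  then have "\<rho> b m z0 = 0" using vx by (simp add: sum_fun_apply sc_apply)
  moreover have "inM 0 0 (\<rho> b m)" by (rule A1[OF b m])
  ultimately show ?thesis using img_char by blast
qed

end


definition Hb :: "key \<Rightarrow> elt" where
  "Hb x = (case x of (k, I, e) \<Rightarrow> shiftn k (interp (Hc (0, sorted_list_of_set I, e))))"

lemma Hb_inM: "inM 2 2 (Hb x)"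
proof -
  obtain k I e where x: "x = (k, I, e)" by (cases x) auto
  have "inM 2 2 (interp (Hc (0, sorted_list_of_set I, e)))" by (rule valid_c_inM[OF Hc_valid])
  then show ?thesis unfolding x Hb_def prod.case by (rule inM_shiftn)
qed

lemma fs_Hb: "fs (Hb x)" using Hb_inM by (rule inM_fs)

lemma mons11_cover: "bideg e = (1, 1) \<Longrightarrow> e \<in> set mons11"
proof -
  assume a: "bideg e = (1, 1)"
  obtain p1 p2 q1 q2 where e: "e = (p1, p2, q1, q2)" by (cases e) auto
  have s: "p1 + p2 = 1" "q1 + q2 = 1" using a e by auto
  have "p1 = 0 \<or> p1 = 1" "q1 = 0 \<or> q1 = 1" using s by arith+
  then show ?thesis using s unfolding e mons11_def by (elim disjE) simp_all
qed

lemma mons22_set: "set mons22 = {(0,2,0,2), (0,2,1,1), (0,2,2,0), (1,1,0,2), (1,1,1,1), (1,1,2,0), (2,0,0,2), (2,0,1,1), (2,0,2,0)}"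
  by (simp add: mons22_def)

lemma mons22_cover: "bideg e = (2, 2) \<Longrightarrow> e \<in> set mons22"
proof -
  assume a: "bideg e = (2, 2)"
  obtain p1 p2 q1 q2 where e: "e = (p1, p2, q1, q2)" by (cases e) auto
  have s: "p1 + p2 = 2" "q1 + q2 = 2" using a e by auto
  have "p1 = 0 \<or> p1 = 1 \<or> p1 = 2" "q1 = 0 \<or> q1 = 1 \<or> q1 = 2" using s by arith+
  then show ?thesis using s unfolding e mons22_set by (elim disjE) simp_all
qed

lemma shift_linpre:
  assumes "\<And>x. x \<in> supp y \<Longrightarrow> (fst x, fst (snd x)) \<noteq> (0, {})"
  shows "shiftn k (lin pre y) = lin pre (shiftn k y)"
proof -
  have "shiftn k (lin pre y) = lin (\<lambda>x. shiftn k (pre x)) y" by (rule lin_map_shiftn[symmetric])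
  also have "\<dots> = lin (\<lambda>x. pre (shk k x)) y"
  proof (rule lin_cong)
    fix x assume x: "x \<in> supp y"
    obtain k' I e where xe: "x = (k', I, e)" by (cases x) auto
    have "(k', I) \<noteq> (0, {})" using assms[OF x] xe by simp
    then show "shiftn k (pre x) = pre (shk k x)" using pre_shift xe by simp
  qed
  also have "\<dots> = lin pre (shiftn k y)" by (rule lin_shiftn[symmetric])
  finally show ?thesis .
qed

lemma nabla_b_avoid: "x \<in> supp (nabla_b y) \<Longrightarrow> (fst x, fst (snd x)) \<noteq> (0, {})"
proof -
  assume x: "x \<in> supp (nabla_b y)"
  obtain k I e where xe: "x = (k, I, e)" by (cases x) auto
  show ?thesis
  proof
    assume "(fst x, fst (snd x)) = (0, {})"
    then have "x = (0, {}, e)" using xe by simp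
    then show False using x nabla_b_z[of y e] by (simp add: supp_def)
  qed
qed

lemma gcm1: "gc (-1, 0) = -1" by (simp add: gc_def complex_eq_iff)

lemma H_main:
  assumes I: "I \<subseteq> {1..4}" and e: "bideg e = (1, 1)"
  shows "nabla (Hb (k, I, e)) = bv (k, I, e) - lin pre (nabla_b (k, I, e))"
proof -
  let ?L = "sorted_list_of_set I"
  have L: "?L \<in> set subs" "set ?L = I" "sorted_wrt (<) ?L" using canon_of[OF I] by auto
  have em: "e \<in> set mons11" using mons11_cover[OF e] .
  have ch: "chkH ?L" using chkH_all[OF L(1)] .
  then have c1: "list_all canon (map fst (c_nabla_b (0, ?L, e)))"
    and c2: "check_eq (c_nabla (Hc (0, ?L, e))) (((0, ?L, e), (16, 0)) # gscale (-1, 0) (c_lin c_pre (c_nabla_b (0, ?L, e))))"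
    using em by (auto simp: chkH_def list_all_iff)
  let ?Y = "nabla_b (0, I, e)"
  have nb: "interp (c_nabla_b (0, ?L, e)) = sc (1 / 16) ?Y"
    using c_nabla_b_sound[OF L(3), of 0 e] L(2) by (simp add: gval16)
  have "nabla (interp (Hc (0, ?L, e))) = interp (c_nabla (Hc (0, ?L, e)))"
    by (rule c_nabla_sound[symmetric]) (rule valid_c_canon[OF Hc_valid])
  also have "\<dots> = interp (((0, ?L, e), (16, 0)) # gscale (-1, 0) (c_lin c_pre (c_nabla_b (0, ?L, e))))"
    by (rule check_eq_sound[OF c2])
  also have "\<dots> = bv (0, I, e) + sc (-1) (sc 16 (lin pre (sc (1 / 16) ?Y)))"
    using L(2) by (simp add: gval16 c_linpre[OF c1] nb gcm1)
  also have "\<dots> = bv (0, I, e) - lin pre ?Y"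
    by (simp add: lin_sc sc_minus1)
  finally have n0: "nabla (interp (Hc (0, ?L, e))) = bv (0, I, e) - lin pre ?Y" .
  have "nabla (Hb (k, I, e)) = shiftn k (bv (0, I, e) - lin pre ?Y)"
    by (simp add: Hb_def nabla_shiftn n0)
  also have "\<dots> = bv (k, I, e) - shiftn k (lin pre ?Y)"
    by (simp add: shiftn_diff shiftn_bv')
  also have "shiftn k (lin pre ?Y) = lin pre (shiftn k ?Y)"
    by (rule shift_linpre) (rule nabla_b_avoid)
  also have "shiftn k ?Y = nabla_b (k, I, e)" by (rule nabla_b_shift[symmetric])
  finally show ?thesis .
qed

lemma sq0:
  assumes I: "I \<subseteq> {1..4}" and e: "bideg e = (2, 2)"
  shows "nabla (nabla_b (0, I, e)) = 0"
proof -
  let ?L = "sorted_list_of_set I"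
  have L: "?L \<in> set subs" "set ?L = I" "sorted_wrt (<) ?L" using canon_of[OF I] by auto
  have em: "e \<in> set mons22" using mons22_cover[OF e] .
  have ch: "chkSq ?L" using chkSq_all[OF L(1)] .
  then have c1: "list_all canon (map fst (c_nabla_b (0, ?L, e)))"
    and c2: "check_eq (c_nabla (c_nabla_b (0, ?L, e))) []"
    using em by (auto simp: chkSq_def list_all_iff)
  have nb: "interp (c_nabla_b (0, ?L, e)) = sc (1 / 16) (nabla_b (0, I, e))"
    using c_nabla_b_sound[OF L(3), of 0 e] L(2) by (simp add: gval16)
  have "sc (1 / 16) (nabla (nabla_b (0, I, e))) = nabla (interp (c_nabla_b (0, ?L, e)))"
    by (simp add: nb nabla_sc)
  also have "\<dots> = interp (c_nabla (c_nabla_b (0, ?L, e)))" by (rule c_nabla_sound[symmetric, OF c1])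
  also have "\<dots> = 0" using check_eq_sound[OF c2] by simp
  finally have "sc (1 / 16) (nabla (nabla_b (0, I, e))) = 0" .
  then have "sc 16 (sc (1 / 16) (nabla (nabla_b (0, I, e)))) = 0" by simp
  then show ?thesis by simp
qed

lemma lin_zero_map: "lin (\<lambda>x. 0) f = 0" by (simp add: lin_def)

lemma part3: "{f. inM 1 1 f \<and> nabla f = 0} = nabla ` {f. inM 2 2 f}"
proof (rule set_eqI, rule iffI)
  fix f assume "f \<in> {f. inM 1 1 f \<and> nabla f = 0}"
  then have f: "inM 1 1 f" and nf: "nabla f = 0" by auto
  have ff: "fs f" using f by (rule inM_fs)
  let ?g = "lin Hb f"
  have "inM 2 2 ?g" by (rule inM_lin[OF ff Hb_inM])
  moreover have "nabla ?g = f"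
  proof -
    have "nabla ?g = lin (\<lambda>x. nabla (Hb x)) f"
      unfolding nabla_def by (rule lin_lin[OF ff fs_Hb])
    also have "\<dots> = lin (\<lambda>x. bv x - lin pre (nabla_b x)) f"
    proof (rule lin_cong)
      fix x assume x: "x \<in> supp f"
      obtain k I e where xe: "x = (k, I, e)" by (cases x) auto
      have v: "I \<subseteq> {1..4}" "bideg e = (1, 1)" using inM_supp[OF f] x xe by auto
      show "nabla (Hb x) = bv x - lin pre (nabla_b x)" using H_main[OF v] xe by simp
    qed
    also have "\<dots> = lin bv f - lin (\<lambda>x. lin pre (nabla_b x)) f" by (rule lin_fun_diff)
    also have "lin (\<lambda>x. lin pre (nabla_b x)) f = lin pre (nabla f)"
      unfolding nabla_def by (rule lin_lin[OF ff fs_nabla_b, symmetric])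
    finally show ?thesis by (simp add: nf lin_bv_id[OF ff])
  qed
  ultimately show "f \<in> nabla ` {f. inM 2 2 f}" by (intro image_eqI[of f nabla ?g]) auto
next
  fix f assume "f \<in> nabla ` {f. inM 2 2 f}"
  then obtain g where g: "inM 2 2 g" and fe: "f = nabla g" by auto
  have fg: "fs g" using g by (rule inM_fs)
  have "inM 1 1 f" using nabla_inM[OF g] fe by simp
  moreover have "nabla f = 0"
  proof -
    have "nabla f = lin nabla_b (lin nabla_b g)" unfolding fe nabla_def ..
    also have "\<dots> = lin (\<lambda>x. lin nabla_b (nabla_b x)) g" by (rule lin_lin[OF fg fs_nabla_b])
    also have "\<dots> = lin (\<lambda>x. nabla (nabla_b x)) g" unfolding nabla_def ..
    also have "\<dots> = lin (\<lambda>x. 0) g"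
    proof (rule lin_cong)
      fix x assume x: "x \<in> supp g"
      obtain k I e where xe: "x = (k, I, e)" by (cases x) auto
      have v: "I \<subseteq> {1..4}" "bideg e = (2, 2)" using inM_supp[OF g] x xe by auto
      show "nabla (nabla_b x) = 0"
        unfolding xe by (subst nabla_b_shift) (simp only: nabla_shiftn sq0[OF v] shiftn_zero)
    qed
    finally show ?thesis by (simp add: lin_zero_map)
  qed
  ultimately show "f \<in> {f. inM 1 1 f \<and> nabla f = 0}" by simp
qed

theorem proposition6p21:
  shows "(\<exists>v0. inM 0 0 v0 \<and> v0 \<notin> nabla ` {f. inM 1 1 f} \<and>
            (\<forall>m. inM 0 0 m \<longrightarrow> (\<exists>c. m - sc c v0 \<in> nabla ` {f. inM 1 1 f})))
       \<and> (\<forall>\<rho>. induced_action_00 \<rho> \<longrightarrow>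
            (\<forall>b m. gvalid b \<longrightarrow> inM 0 0 m \<longrightarrow> \<rho> b m \<in> nabla ` {f. inM 1 1 f}))
       \<and> {f. inM 1 1 f \<and> nabla f = 0} = nabla ` {f. inM 2 2 f}"
proof (intro conjI)
  have o: "inM 0 0 one00" unfolding one00_def by (rule inM_bv) simp_all
  have o1: "one00 z0 = 1" by (simp add: one00_def bv_def)
  show "\<exists>v0. inM 0 0 v0 \<and> v0 \<notin> nabla ` {f. inM 1 1 f} \<and>
            (\<forall>m. inM 0 0 m \<longrightarrow> (\<exists>c. m - sc c v0 \<in> nabla ` {f. inM 1 1 f}))"
  proof (rule exI[of _ one00], intro conjI)
    show "inM 0 0 one00" by (rule o)
    show "one00 \<notin> nabla ` {f. inM 1 1 f}" unfolding img_char using o1 by simp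
    show "\<forall>m. inM 0 0 m \<longrightarrow> (\<exists>c. m - sc c one00 \<in> nabla ` {f. inM 1 1 f})"
    proof (intro allI impI)
      fix m assume m: "inM 0 0 m"
      have "m - sc (m z0) one00 \<in> {g. inM 0 0 g \<and> g z0 = 0}"
        using inM_diff[OF m inM_sc[OF o]] o1 by (simp add: minus_apply sc_apply)
      then show "\<exists>c. m - sc c one00 \<in> nabla ` {f. inM 1 1 f}" unfolding img_char by blast
    qed
  qed
  show "\<forall>\<rho>. induced_action_00 \<rho> \<longrightarrow>
            (\<forall>b m. gvalid b \<longrightarrow> inM 0 0 m \<longrightarrow> \<rho> b m \<in> nabla ` {f. inM 1 1 f})"
    using part2 by blast
  show "{f. inM 1 1 f \<and> nabla f = 0} = nabla ` {f. inM 2 2 f}" by (rule part3)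
qed


end
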